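(* Every finitely generated non-abelian free group is Hucha with respect to the family of its finitely generated infinite-index subgroups.
   Context: A positive cone of a group $G$ is a subsemigroup $P$ with $G=P\sqcup P^{-1}\sqcup\{1\}$. With a finite symmetric generating set $X$ and word metric $d_X$, an $r$-path is a sequence $g_0,\dots,g_n$ with $d_X(g_i,g_{i+1})\le r$. A set $S$ $r$-disconnects subsets $H_1,H_2$ if every $r$-path from $H_1$ to $H_2$ meets $S$; $S$ $r$-disconnects $P$ if there are $u,v\in P$ with $S$ $r$-disconnecting $\{u\},\{v\}$. A negative swamp of width $r$ for a subgroup $H$ (with respect to $P$) is $S\subseteq P^{-1}$ that $r$-disconnects $P$ and $r$-disconnects $g_1H,g_2H$ for some $g_1,g_2\in G$. A finitely generated left-orderable group $G$ is Hucha with respect to a family $\mathcal{H}$ of subgroups if for some (equivalently any) finite generating set, for every positive cone $P$, every $H\in\mathcal{H}$ and every $r>0$ there is a negative swamp of width $r$ for $H$. *)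

theory Defs
  imports "HOL-Algebra.Algebra"
begin

text \<open>A word over a set of letters: a letter (s, True) stands for s, (s, False) for s inverse.\<close>

definition eval_word :: "('a, 'b) monoid_scheme \<Rightarrow> ('a \<times> bool) list \<Rightarrow> 'a" where
  "eval_word G w = foldr (\<lambda>(s, e) acc. (if e then s else inv\<^bsub>G\<^esub> s) \<otimes>\<^bsub>G\<^esub> acc) w \<one>\<^bsub>G\<^esub>"

definition reduced_word :: "('a \<times> bool) list \<Rightarrow> bool" where
  "reduced_word w \<longleftrightarrow> (\<forall>i. Suc i < length w \<longrightarrow>
      \<not> (fst (w ! i) = fst (w ! Suc i) \<and> snd (w ! i) \<noteq> snd (w ! Suc i)))"

definition free_basis :: "('a, 'b) monoid_scheme \<Rightarrow> 'a set \<Rightarrow> bool" where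
  "free_basis G S \<longleftrightarrow> S \<subseteq> carrier G \<and> generate G S = carrier G \<and>
     (\<forall>w. w \<noteq> [] \<and> reduced_word w \<and> fst ` set w \<subseteq> S \<longrightarrow> eval_word G w \<noteq> \<one>\<^bsub>G\<^esub>)"

definition free_group :: "('a, 'b) monoid_scheme \<Rightarrow> bool" where
  "free_group G \<longleftrightarrow> group G \<and> (\<exists>S. free_basis G S)"

definition finitely_generated :: "('a, 'b) monoid_scheme \<Rightarrow> bool" where
  "finitely_generated G \<longleftrightarrow> (\<exists>T. finite T \<and> T \<subseteq> carrier G \<and> generate G T = carrier G)"

definition positive_cone :: "('a, 'b) monoid_scheme \<Rightarrow> 'a set \<Rightarrow> bool" where
  "positive_cone G P \<longleftrightarrow> P \<subseteq> carrier G \<and>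
     (\<forall>x\<in>P. \<forall>y\<in>P. x \<otimes>\<^bsub>G\<^esub> y \<in> P) \<and>
     carrier G = P \<union> (m_inv G ` P) \<union> {\<one>\<^bsub>G\<^esub>} \<and>
     P \<inter> (m_inv G ` P) = {} \<and> \<one>\<^bsub>G\<^esub> \<notin> P \<and> \<one>\<^bsub>G\<^esub> \<notin> m_inv G ` P"

definition left_orderable :: "('a, 'b) monoid_scheme \<Rightarrow> bool" where
  "left_orderable G \<longleftrightarrow> (\<exists>P. positive_cone G P)"

definition word_length :: "('a, 'b) monoid_scheme \<Rightarrow> 'a set \<Rightarrow> 'a \<Rightarrow> nat" where
  "word_length G T g = (LEAST n. \<exists>xs. length xs = n \<and> set xs \<subseteq> T \<and>
       foldr (\<otimes>\<^bsub>G\<^esub>) xs \<one>\<^bsub>G\<^esub> = g)"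

definition word_dist :: "('a, 'b) monoid_scheme \<Rightarrow> 'a set \<Rightarrow> 'a \<Rightarrow> 'a \<Rightarrow> nat" where
  "word_dist G T g h = word_length G T (inv\<^bsub>G\<^esub> g \<otimes>\<^bsub>G\<^esub> h)"

definition r_path :: "('a, 'b) monoid_scheme \<Rightarrow> 'a set \<Rightarrow> nat \<Rightarrow> 'a list \<Rightarrow> bool" where
  "r_path G T r p \<longleftrightarrow> p \<noteq> [] \<and> set p \<subseteq> carrier G \<and>
     (\<forall>i. Suc i < length p \<longrightarrow> word_dist G T (p ! i) (p ! Suc i) \<le> r)"

definition r_disconnects :: "('a, 'b) monoid_scheme \<Rightarrow> 'a set \<Rightarrow> nat \<Rightarrow> 'a set \<Rightarrow> 'a set \<Rightarrow> 'a set \<Rightarrow> bool" where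
  "r_disconnects G T r S H1 H2 \<longleftrightarrow>
     (\<forall>p. r_path G T r p \<and> hd p \<in> H1 \<and> last p \<in> H2 \<longrightarrow> set p \<inter> S \<noteq> {})"

definition r_disconnects_cone :: "('a, 'b) monoid_scheme \<Rightarrow> 'a set \<Rightarrow> nat \<Rightarrow> 'a set \<Rightarrow> 'a set \<Rightarrow> bool" where
  "r_disconnects_cone G T r S P \<longleftrightarrow> (\<exists>u\<in>P. \<exists>v\<in>P. r_disconnects G T r S {u} {v})"

definition negative_swamp :: "('a, 'b) monoid_scheme \<Rightarrow> 'a set \<Rightarrow> 'a set \<Rightarrow> 'a set \<Rightarrow> nat \<Rightarrow> 'a set \<Rightarrow> bool" where
  "negative_swamp G T P H r S \<longleftrightarrow> S \<subseteq> m_inv G ` P \<and> r_disconnects_cone G T r S P \<and>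
     (\<exists>g1\<in>carrier G. \<exists>g2\<in>carrier G. r_disconnects G T r S (g1 <#\<^bsub>G\<^esub> H) (g2 <#\<^bsub>G\<^esub> H))"

text \<open>Hucha property, using an arbitrary finite symmetric generating set
  (the paper shows that "some" and "any" are equivalent; we use "any").\<close>
definition hucha :: "('a, 'b) monoid_scheme \<Rightarrow> 'a set set \<Rightarrow> bool" where
  "hucha G \<H> \<longleftrightarrow> group G \<and> finitely_generated G \<and> left_orderable G \<and>
     (\<forall>T. finite T \<and> T \<subseteq> carrier G \<and> m_inv G ` T = T \<and> generate G T = carrier G \<longrightarrow>
       (\<forall>P. positive_cone G P \<longrightarrow> (\<forall>H\<in>\<H>. \<forall>r>0. \<exists>S. negative_swamp G T P H r S)))"

definition fg_infinite_index_subgroups :: "('a, 'b) monoid_scheme \<Rightarrow> 'a set set" where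
  "fg_infinite_index_subgroups G = {H. subgroup H G \<and>
      (\<exists>Y. finite Y \<and> Y \<subseteq> H \<and> generate G Y = H) \<and> infinite (rcosets\<^bsub>G\<^esub> H)}"

end

theory Submission
  imports Defs "HOL-Library.Countable_Set" "HOL-Library.Product_Lexorder"
begin

fun smul :: "('a list \<Rightarrow> int) \<Rightarrow> ('a list \<Rightarrow> int) \<Rightarrow> 'a list \<Rightarrow> int" where
  "smul f g [] = f [] * g []"
| "smul f g (a # m) = f [] * g (a # m) + smul (\<lambda>m'. f (a # m')) g m"

definition sone :: "'a list \<Rightarrow> int" where "sone m = (if m = [] then 1 else 0)"

lemma smul_zero_left: "smul (\<lambda>_. 0) g m = 0"
  by (induction m) auto

lemma smul_add_left: "smul (\<lambda>m. f m + f' m) g m = smul f g m + smul f' g m"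
  by (induction m arbitrary: f f') (auto simp: algebra_simps)

lemma smul_scale_left: "smul (\<lambda>m. c * f m) g m = c * smul f g m"
  by (induction m arbitrary: f) (auto simp: algebra_simps)

lemma smul_add_right: "smul f (\<lambda>m. g m + g' m) m = smul f g m + smul f g' m"
  by (induction m arbitrary: f) (auto simp: algebra_simps)

lemma smul_assoc: "smul (smul f g) h m = smul f (smul g h) m"
proof (induction m arbitrary: f g h)
  case Nil then show ?case by simp
next
  case (Cons a m)
  have e: "(\<lambda>m'. smul f g (a # m')) = (\<lambda>m'. f [] * g (a # m') + smul (\<lambda>m'. f (a # m')) g m')"
    by simp
  have "smul (smul f g) h (a # m) = f [] * g [] * h (a # m) + smul (\<lambda>m'. f [] * g (a # m') + smul (\<lambda>m'. f (a # m')) g m') h m"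
    by (simp add: e)
  also have "\<dots> = f [] * g [] * h (a # m) + f [] * smul (\<lambda>m'. g (a # m')) h m + smul (smul (\<lambda>m'. f (a # m')) g) h m"
    by (simp add: smul_add_left smul_scale_left)
  also have "\<dots> = f [] * g [] * h (a # m) + f [] * smul (\<lambda>m'. g (a # m')) h m + smul (\<lambda>m'. f (a # m')) (smul g h) m"
    using Cons by simp
  also have "\<dots> = smul f (smul g h) (a # m)" by (simp add: algebra_simps)
  finally show ?case .
qed

lemma smul_one_left: "smul sone g m = g m"
proof (cases m)
  case (Cons a m') then show ?thesis
    using smul_zero_left[of g m'] by (simp add: sone_def)
qed (simp add: sone_def)

lemma smul_one_right: "smul f sone m = f m"
  by (induction m arbitrary: f) (auto simp: sone_def)

lemma smul_Nil: "smul f g [] = f [] * g []" by simp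

definition ET :: "'a \<Rightarrow> 'a list \<Rightarrow> int" where
  "ET s m = (if m = [] \<or> m = [s] then 1 else 0)"
definition EF :: "'a \<Rightarrow> 'a list \<Rightarrow> int" where
  "EF s m = (if m = replicate (length m) s then (-1) ^ length m else 0)"

lemma EF_Cons: "EF s (a # m) = (if a = s then - EF s m else 0)"
  by (auto simp: EF_def)

lemma ET_EF: "smul (ET s) (EF s) m = sone m"
proof (cases m)
  case Nil then show ?thesis by (simp add: ET_def EF_def sone_def)
next
  case (Cons a m')
  have "(\<lambda>m''. ET s (a # m'')) = (\<lambda>m''. if a = s then sone m'' else 0)"
    by (auto simp: ET_def sone_def)
  then have "smul (ET s) (EF s) m = EF s m + (if a = s then EF s m' else 0)"
    using Cons by (cases "a = s") (auto simp: smul_one_left smul_zero_left ET_def)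
  then show ?thesis using Cons
    by (auto simp: EF_Cons sone_def)
qed

lemma EF_ET: "smul (EF s) (ET s) m = sone m"
proof (induction m)
  case Nil then show ?case by (simp add: ET_def EF_def sone_def)
next
  case (Cons a m)
  have e: "(\<lambda>m''. EF s (a # m'')) = (\<lambda>m''. (if a = s then -1 else 0) * EF s m'')"
    by (auto simp: EF_Cons)
  have "smul (EF s) (ET s) (a # m) = EF s [] * ET s (a # m) + smul (\<lambda>m''. EF s (a # m'')) (ET s) m"
    by simp
  also have "\<dots> = ET s (a # m) + (if a = s then -1 else 0) * sone m"
    unfolding e smul_scale_left Cons by (simp add: EF_def)
  finally have "smul (EF s) (ET s) (a # m) = ET s (a # m) + (if a = s then -1 else 0) * sone m" .
  then show ?case by (simp only:) (auto simp: ET_def sone_def)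
qed

definition flp :: "'a \<times> bool \<Rightarrow> 'a \<times> bool" where "flp x = (fst x, \<not> snd x)"
definition winv :: "('a \<times> bool) list \<Rightarrow> ('a \<times> bool) list" where "winv w = rev (map flp w)"

lemma flp_flp[simp]: "flp (flp x) = x" by (simp add: flp_def)
lemma flp_neq[simp]: "flp x \<noteq> x" by (cases x) (simp add: flp_def)
lemma flp_neq'[simp]: "x \<noteq> flp x" by (cases x) (simp add: flp_def)
lemma fst_flp[simp]: "fst (flp x) = fst x" by (simp add: flp_def)
lemma flp_inj[simp]: "flp x = flp y \<longleftrightarrow> x = y" by (cases x, cases y) (auto simp: flp_def)

lemma winv_Nil[simp]: "winv [] = []" by (simp add: winv_def)
lemma winv_Cons[simp]: "winv (x # w) = winv w @ [flp x]" by (simp add: winv_def)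
lemma winv_append[simp]: "winv (u @ v) = winv v @ winv u" by (simp add: winv_def)
lemma winv_winv[simp]: "winv (winv w) = w" by (simp add: winv_def rev_map[symmetric] comp_def)
lemma winv_eq_Nil[simp]: "winv w = [] \<longleftrightarrow> w = []" by (simp add: winv_def)
lemma length_winv[simp]: "length (winv w) = length w" by (simp add: winv_def)
lemma set_winv_fst[simp]: "fst ` set (winv w) = fst ` set w"
  by (auto simp: winv_def image_image)
lemma hd_winv: "w \<noteq> [] \<Longrightarrow> hd (winv w) = flp (last w)"
  by (simp add: winv_def hd_rev last_map)
lemma last_winv: "w \<noteq> [] \<Longrightarrow> last (winv w) = flp (hd w)"
  by (simp add: winv_def last_rev hd_map)

fun red :: "('a \<times> bool) list \<Rightarrow> bool" where
  "red [] = True"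
| "red [x] = True"
| "red (x # y # w) = (y \<noteq> flp x \<and> red (y # w))"

lemma red_Cons: "red (x # w) \<longleftrightarrow> red w \<and> (w \<noteq> [] \<longrightarrow> hd w \<noteq> flp x)"
  by (cases w) auto

lemma adj_Cons: "(\<forall>i. Suc i < length (x#y#w) \<longrightarrow> Q ((x#y#w)!i) ((x#y#w)!Suc i)) \<longleftrightarrow>
   Q x y \<and> (\<forall>i. Suc i < length (y#w) \<longrightarrow> Q ((y#w)!i) ((y#w)!Suc i))"
  apply (rule iffI)
   apply (intro conjI allI impI)
    apply (drule spec[of _ 0]) apply simp
   apply (drule_tac x="Suc i" in spec) apply simp
  apply (intro allI impI) apply (case_tac i) apply auto
  done

lemma reduced_word_red: "reduced_word w = red w"
proof (induction w rule: red.induct)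
  case (3 x y w)
  have c: "(y \<noteq> flp x) \<longleftrightarrow> \<not> (fst x = fst y \<and> snd x \<noteq> snd y)"
    by (cases x, cases y) (auto simp: flp_def)
  show ?case using 3 unfolding reduced_word_def adj_Cons[where Q="\<lambda>a b. \<not> (fst a = fst b \<and> snd a \<noteq> snd b)"] c
    by (cases x; cases y) (auto simp: flp_def)
qed (auto simp: reduced_word_def)

lemma red_append: "red (u @ v) \<longleftrightarrow> red u \<and> red v \<and> (u \<noteq> [] \<and> v \<noteq> [] \<longrightarrow> hd v \<noteq> flp (last u))"
  by (induction u) (auto simp: red_Cons)

lemma red_snoc: "red (w @ [x]) \<longleftrightarrow> red w \<and> (w \<noteq> [] \<longrightarrow> x \<noteq> flp (last w))"
  by (auto simp: red_append)

lemma red_winv: "red w \<Longrightarrow> red (winv w)"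
proof (induction w)
  case (Cons x w)
  then show ?case
    by (auto simp: red_append red_Cons hd_winv last_winv)
qed simp

lemma red_appendD1: "red (u @ v) \<Longrightarrow> red u" by (simp add: red_append)
lemma red_appendD2: "red (u @ v) \<Longrightarrow> red v" by (simp add: red_append)

lemma cancel_decomp:
  assumes "red u" "red v"
  shows "\<exists>\<alpha> \<gamma> \<beta>. u = \<alpha> @ \<gamma> \<and> v = winv \<gamma> @ \<beta> \<and> red (\<alpha> @ \<beta>)"
  using assms
proof (induction u arbitrary: v rule: rev_induct)
  case Nil then show ?case by (intro exI[of _ "[]"] exI[of _ v]) auto
next
  case (snoc x u)
  show ?case
  proof (cases v)
    case Nil then show ?thesis using snoc by (intro exI[of _ "u @ [x]"] exI[of _ "[]"]) auto
  next
    case (Cons y v')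
    show ?thesis
    proof (cases "y = flp x")
      case True
      have "red u" "red v'" using snoc(2,3) Cons by (auto simp: red_append red_Cons)
      then obtain \<alpha> \<gamma> \<beta> where h: "u = \<alpha> @ \<gamma>" "v' = winv \<gamma> @ \<beta>" "red (\<alpha> @ \<beta>)"
        using snoc(1) by blast
      show ?thesis
        by (intro exI[of _ \<alpha>] exI[of _ "\<gamma> @ [x]"] exI[of _ \<beta>]) (simp add: h Cons True)
    next
      case False
      have "red (u @ [x] @ v)"
        using snoc(2,3) Cons False by (simp add: red_append)
      then show ?thesis by (intro exI[of _ "u @ [x]"] exI[of _ "[]"] exI[of _ v]) simp
    qed
  qed
qed

definition ltr :: "('a, 'b) monoid_scheme \<Rightarrow> 'a \<times> bool \<Rightarrow> 'a" where
  "ltr G x = (if snd x then fst x else inv\<^bsub>G\<^esub> (fst x))"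

lemma eval_word_Nil[simp]: "eval_word G [] = \<one>\<^bsub>G\<^esub>" by (simp add: eval_word_def)
lemma eval_word_Cons[simp]: "eval_word G (x # w) = ltr G x \<otimes>\<^bsub>G\<^esub> eval_word G w"
  by (cases x) (simp add: eval_word_def ltr_def)

definition wS :: "'a set \<Rightarrow> ('a \<times> bool) list \<Rightarrow> bool" where "wS S w \<longleftrightarrow> fst ` set w \<subseteq> S"

lemma wS_simps[simp]: "wS S [] " "wS S (x # w) \<longleftrightarrow> fst x \<in> S \<and> wS S w"
  "wS S (u @ v) \<longleftrightarrow> wS S u \<and> wS S v"
  by (auto simp: wS_def)
lemma wS_winv[simp]: "wS S (winv w) \<longleftrightarrow> wS S w"
  unfolding wS_def set_winv_fst ..

locale fgrp = group G for G (structure) + fixes S assumes fb: "free_basis G S"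
begin

lemma S_carrier: "S \<subseteq> carrier G" using fb by (simp add: free_basis_def)
lemma gen_S: "generate G S = carrier G" using fb by (simp add: free_basis_def)
lemma no_rel: "w \<noteq> [] \<Longrightarrow> red w \<Longrightarrow> wS S w \<Longrightarrow> eval_word G w \<noteq> \<one>"
  using fb by (simp add: free_basis_def reduced_word_red wS_def)

lemma ltr_closed[simp]: "fst x \<in> S \<Longrightarrow> ltr G x \<in> carrier G"
  using S_carrier by (auto simp: ltr_def)

lemma ltr_flp: "fst x \<in> S \<Longrightarrow> ltr G (flp x) = inv (ltr G x)"
  using S_carrier by (auto simp: ltr_def flp_def)

lemma eval_closed[simp]: "wS S w \<Longrightarrow> eval_word G w \<in> carrier G"
  by (induction w) auto

lemma eval_append: "wS S u \<Longrightarrow> wS S v \<Longrightarrow> eval_word G (u @ v) = eval_word G u \<otimes> eval_word G v"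
  by (induction u) (auto simp: m_assoc)

lemma eval_winv: "wS S w \<Longrightarrow> eval_word G (winv w) = inv (eval_word G w)"
proof (induction w)
  case (Cons x w)
  have "eval_word G (winv (x # w)) = eval_word G (winv w) \<otimes> ltr G (flp x)"
    using Cons.prems by (simp add: eval_append)
  also have "\<dots> = inv (eval_word G w) \<otimes> inv (ltr G x)" using Cons by (simp add: ltr_flp)
  also have "\<dots> = inv (ltr G x \<otimes> eval_word G w)" using Cons.prems by (simp add: inv_mult_group)
  finally show ?case by simp
qed simp

lemma red_unique:
  assumes "red u" "red v" "wS S u" "wS S v" "eval_word G u = eval_word G v"
  shows "u = v"
  using assms
proof (induction u arbitrary: v)
  case Nil
  then show ?case using no_rel[of v] by (metis eval_word_Nil)
next
  case (Cons x u)
  show ?case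
  proof (cases v)
    case Nil
    then show ?thesis using no_rel[of "x # u"] Cons.prems by auto
  next
    case (Cons y v')
    show ?thesis
    proof (cases "x = y")
      case True
      have "eval_word G u = eval_word G v'"
        using Cons.prems Cons True by (auto intro: l_cancel[of "ltr G y"])
      then have "u = v'" using Cons.IH[of v'] Cons.prems Cons by (auto simp: red_Cons)
      then show ?thesis using True Cons by simp
    next
      case False
      let ?w = "winv (x # u) @ v"
      have "red ?w" using Cons.prems Cons False red_winv[of "x # u"]
        by (simp add: red_append del: winv_Cons) (simp)
      moreover have "wS S ?w" using Cons.prems by (simp del: winv_Cons)
      moreover have "?w \<noteq> []" by simp
      moreover have "eval_word G ?w = \<one>"
        using Cons.prems by (simp add: eval_append eval_winv del: winv_Cons eval_word_Cons)
      ultimately show ?thesis using no_rel by blast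
    qed
  qed
qed

lemma eval_cancel: "wS S g \<Longrightarrow> eval_word G (g @ winv g) = \<one>"
  by (simp add: eval_append eval_winv)

lemma red_mult:
  assumes "red u" "red v" "wS S u" "wS S v"
  shows "\<exists>\<alpha> \<gamma> \<beta>. u = \<alpha> @ \<gamma> \<and> v = winv \<gamma> @ \<beta> \<and> red (\<alpha> @ \<beta>) \<and> wS S (\<alpha> @ \<beta>) \<and>
     eval_word G (\<alpha> @ \<beta>) = eval_word G u \<otimes> eval_word G v"
proof -
  obtain \<alpha> \<gamma> \<beta> where h: "u = \<alpha> @ \<gamma>" "v = winv \<gamma> @ \<beta>" "red (\<alpha> @ \<beta>)"
    using cancel_decomp[OF assms(1,2)] by blast
  have w: "wS S \<alpha>" "wS S \<gamma>" "wS S \<beta>" using assms(3,4) h by auto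
  have aux: "eval_word G \<gamma> \<otimes> (inv eval_word G \<gamma> \<otimes> eval_word G \<beta>) = eval_word G \<beta>"
    using w by (simp add: m_assoc[symmetric])
  have "eval_word G u \<otimes> eval_word G v = eval_word G \<alpha> \<otimes> (eval_word G \<gamma> \<otimes> inv eval_word G \<gamma>) \<otimes> eval_word G \<beta>"
    using w by (simp add: h eval_append eval_winv m_assoc aux)
  also have "\<dots> = eval_word G (\<alpha> @ \<beta>)" using w by (simp add: eval_append)
  finally show ?thesis using h w by auto
qed

lemma nf_exists: "x \<in> carrier G \<Longrightarrow> \<exists>w. red w \<and> wS S w \<and> eval_word G w = x"
proof -
  assume "x \<in> carrier G"
  then have "x \<in> generate G S" using gen_S by simp
  then show ?thesis
  proof (induction rule: generate.induct)
    case one then show ?case by (intro exI[of _ "[]"]) auto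
  next
    case (incl h) then show ?case using S_carrier
      by (intro exI[of _ "[(h, True)]"]) (auto simp: ltr_def)
  next
    case (inv h) then show ?case using S_carrier
      by (intro exI[of _ "[(h, False)]"]) (auto simp: ltr_def)
  next
    case (eng h1 h2)
    then obtain u v where "red u" "wS S u" "eval_word G u = h1" "red v" "wS S v" "eval_word G v = h2" by blast
    then show ?case using red_mult[of u v] by blast
  qed
qed

definition nf :: "'a \<Rightarrow> ('a \<times> bool) list" where
  "nf x = (THE w. red w \<and> wS S w \<and> eval_word G w = x)"

lemma nf_props: assumes "x \<in> carrier G" shows "red (nf x)" "wS S (nf x)" "eval_word G (nf x) = x"
proof -
  obtain w where w: "red w \<and> wS S w \<and> eval_word G w = x" using nf_exists[OF assms] by blast
  have "red (nf x) \<and> wS S (nf x) \<and> eval_word G (nf x) = x"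
    unfolding nf_def by (rule theI[of _ w]) (use w red_unique in blast)+
  then show "red (nf x)" "wS S (nf x)" "eval_word G (nf x) = x" by auto
qed

lemma nf_eval: "red w \<Longrightarrow> wS S w \<Longrightarrow> nf (eval_word G w) = w"
  using nf_props[of "eval_word G w"] red_unique by force

lemma nf_one[simp]: "nf \<one> = []"
  using nf_eval[of "[]"] by simp

lemma nf_Nil_iff: "x \<in> carrier G \<Longrightarrow> nf x = [] \<longleftrightarrow> x = \<one>"
  using nf_props[of x] by auto

lemma nf_mult:
  assumes "x \<in> carrier G" "y \<in> carrier G"
  shows "\<exists>\<alpha> \<gamma> \<beta>. nf x = \<alpha> @ \<gamma> \<and> nf y = winv \<gamma> @ \<beta> \<and> nf (x \<otimes> y) = \<alpha> @ \<beta>"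
proof -
  obtain \<alpha> \<gamma> \<beta> where h: "nf x = \<alpha> @ \<gamma>" "nf y = winv \<gamma> @ \<beta>" "red (\<alpha> @ \<beta>)" "wS S (\<alpha> @ \<beta>)"
     "eval_word G (\<alpha> @ \<beta>) = x \<otimes> y"
    using red_mult[of "nf x" "nf y"] nf_props[OF assms(1)] nf_props[OF assms(2)] by metis
  then have "nf (x \<otimes> y) = \<alpha> @ \<beta>" using nf_eval[of "\<alpha> @ \<beta>"] by simp
  then show ?thesis using h by blast
qed

lemma nf_inv: "x \<in> carrier G \<Longrightarrow> nf (inv x) = winv (nf x)"
  using nf_eval[of "winv (nf x)"] red_winv[OF nf_props(1)] nf_props(2,3) eval_winv[of "nf x"]
  by simp

definition len :: "'a \<Rightarrow> nat" where "len x = length (nf x)"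

lemma len_mult: "x \<in> carrier G \<Longrightarrow> y \<in> carrier G \<Longrightarrow> len (x \<otimes> y) \<le> len x + len y"
  using nf_mult[of x y] by (auto simp: len_def)

lemma len_inv: "x \<in> carrier G \<Longrightarrow> len (inv x) = len x"
  by (simp add: len_def nf_inv)

lemma nf_inv_mult_diff:
  assumes "a \<in> carrier G" "b \<in> carrier G" "nf a \<noteq> []" "nf b \<noteq> []" "hd (nf a) \<noteq> hd (nf b)"
  shows "nf (inv a \<otimes> b) = winv (nf a) @ nf b"
proof -
  have "red (winv (nf a) @ nf b)"
    using assms nf_props red_winv[of "nf a"] by (auto simp: red_append last_winv)
  moreover have "wS S (winv (nf a) @ nf b)" using nf_props assms by simp
  ultimately show ?thesis using nf_eval[of "winv (nf a) @ nf b"] nf_props assms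
    by (simp add: eval_append eval_winv)
qed

lemma nf_ltr_mult:
  assumes "fst x \<in> S" "z \<in> carrier G" "nf z = [] \<or> hd (nf z) \<noteq> flp x"
  shows "nf (ltr G x \<otimes> z) = x # nf z"
proof -
  have "red (x # nf z)" "wS S (x # nf z)" using assms nf_props[of z] by (auto simp: red_Cons)
  then show ?thesis using nf_eval[of "x # nf z"] nf_props[of z] assms by simp
qed

end

fun adjd :: "'a list \<Rightarrow> bool" where
  "adjd [] = True" | "adjd [x] = True" | "adjd (x # y # m) = (x \<noteq> y \<and> adjd (y # m))"

lemma adjd_Cons: "adjd (x # m) \<longleftrightarrow> adjd m \<and> (m \<noteq> [] \<longrightarrow> hd m \<noteq> x)"
  by (cases m) auto

definition upow :: "'a \<Rightarrow> ('a list \<Rightarrow> int) \<Rightarrow> bool" where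
  "upow s U \<longleftrightarrow> (\<forall>m. U m \<noteq> 0 \<longrightarrow> m = replicate (length m) s)"

lemma upow_shift_other: assumes "upow s U" "a \<noteq> s" shows "(\<lambda>m. U (a # m)) = (\<lambda>_. 0)"
proof (rule ext)
  fix m show "U (a # m) = 0"
  proof (rule ccontr)
    assume "U (a # m) \<noteq> 0"
    then have "a # m = replicate (length (a # m)) s" using assms by (auto simp: upow_def)
    then show False using assms(2) by simp
  qed
qed

lemma upow_shift: "upow s U \<Longrightarrow> upow s (\<lambda>m. U (a # m))"
  by (auto simp: upow_def)

lemma smul_upow_adjd:
  assumes "upow s U" "adjd m"
  shows "smul U V m = U [] * V m + (if m \<noteq> [] \<and> hd m = s then U [s] * V (tl m) else 0)"
proof (cases m)
  case Nil then show ?thesis by simp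
next
  case (Cons a m')
  show ?thesis
  proof (cases "a = s")
    case False
    then show ?thesis using Cons upow_shift_other[OF assms(1) False] smul_zero_left by simp
  next
    case True
    have us: "upow s (\<lambda>m. U (s # m))" using upow_shift[OF assms(1)] .
    have "smul (\<lambda>m''. U (s # m'')) V m' = U [s] * V m'"
    proof (cases m')
      case (Cons b m2)
      have "b \<noteq> s" using assms(2) \<open>m = a # m'\<close> True Cons by auto
      then show ?thesis using Cons upow_shift_other[OF us, of b] smul_zero_left by simp
    qed simp
    then show ?thesis using Cons True by simp
  qed
qed

lemma upow_smul: "upow s f \<Longrightarrow> upow s g \<Longrightarrow> upow s (smul f g)"
proof -
  assume f: "upow s f" and g: "upow s g"
  have "\<And>m. smul f g m \<noteq> 0 \<Longrightarrow> m = replicate (length m) s"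
  proof -
    fix m show "smul f g m \<noteq> 0 \<Longrightarrow> m = replicate (length m) s"
      using f
    proof (induction m arbitrary: f)
      case Nil then show ?case by simp
    next
      case (Cons a m)
      show ?case
      proof (cases "g (a # m) \<noteq> 0")
        case True then show ?thesis using g by (auto simp: upow_def)
      next
        case False
        then have nz: "smul (\<lambda>m'. f (a # m')) g m \<noteq> 0" using Cons.prems by simp
        have as: "a = s"
        proof (rule ccontr)
          assume "a \<noteq> s"
          then show False using nz upow_shift_other[OF Cons.prems(2)] smul_zero_left by metis
        qed
        have "m = replicate (length m) s" using Cons.IH[OF nz upow_shift[OF Cons.prems(2)]] .
        then show ?thesis using as by (metis length_Cons replicate_Suc)
      qed
    qed
  qed
  then show ?thesis by (simp add: upow_def)
qed

definition LL :: "'a \<times> bool \<Rightarrow> 'a list \<Rightarrow> int" where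
  "LL x = (if snd x then ET (fst x) else EF (fst x))"

definition Phi :: "('a \<times> bool) list \<Rightarrow> 'a list \<Rightarrow> int" where
  "Phi w = foldr (\<lambda>x acc. smul (LL x) acc) w sone"

lemma Phi_Nil[simp]: "Phi [] = sone" by (simp add: Phi_def)
lemma Phi_Cons: "Phi (x # w) = smul (LL x) (Phi w)" by (simp add: Phi_def)

lemma smul_assoc': "smul (smul f g) h = smul f (smul g h)" by (rule ext, rule smul_assoc)
lemma smul_one_left': "smul sone g = g" by (rule ext, rule smul_one_left)
lemma smul_one_right': "smul f sone = f" by (rule ext, rule smul_one_right)

lemma Phi_append: "Phi (u @ v) = smul (Phi u) (Phi v)"
proof (induction u)
  case Nil then show ?case by (simp add: smul_one_left')
next
  case (Cons x u)
  then show ?case by (simp add: Phi_Cons smul_assoc')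
qed

lemma LL_flp: "smul (LL x) (LL (flp x)) = sone"
  by (auto simp: fun_eq_iff LL_def flp_def ET_EF EF_ET)

lemma Phi_cancel: "Phi (g @ winv g) = sone"
proof (induction g)
  case Nil then show ?case by simp
next
  case (Cons x g)
  have "Phi ((x # g) @ winv (x # g)) = Phi ([x] @ (g @ winv g) @ [flp x])" by simp
  also have "\<dots> = smul (LL x) (smul sone (LL (flp x)))"
  proof -
    have "Phi ([x] @ (g @ winv g) @ [flp x]) = smul (Phi [x]) (smul (Phi (g @ winv g)) (Phi [flp x]))"
      by (simp only: Phi_append)
    then show ?thesis unfolding Cons by (simp add: Phi_Cons smul_one_right' smul_one_left')
  qed
  also have "\<dots> = sone" using LL_flp[of x] by (simp add: smul_one_left')
  finally show ?case .
qed

lemma Phi_const: "Phi w [] = 1"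
  by (induction w) (auto simp: Phi_Cons LL_def ET_def EF_def sone_def)

lemma upow_LL: "upow (fst x) (LL x)"
  by (auto simp: upow_def LL_def ET_def EF_def split: if_splits)

lemma upow_sone: "upow s sone" by (auto simp: upow_def sone_def)

lemma Phi_rep_upow: "upow (fst x) (Phi (replicate n x))"
  by (induction n) (auto simp: upow_sone Phi_Cons intro: upow_smul upow_LL)

lemma Phi_rep_s: "Phi (replicate n x) [fst x] = (if snd x then int n else - int n)"
proof (induction n)
  case 0 then show ?case by (simp add: sone_def)
next
  case (Suc n)
  have "Phi (replicate (Suc n) x) [fst x] = LL x [] * Phi (replicate n x) [fst x] + LL x [fst x] * Phi (replicate n x) []"
    by (simp add: Phi_Cons)
  then show ?case using Suc Phi_const[of "replicate n x"]
    by (auto simp: LL_def ET_def EF_def)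
qed

lemma magnus_aux:
  assumes "red w"
  shows "\<exists>m. adjd m \<and> set m \<subseteq> fst ` set w \<and> Phi w m \<noteq> 0 \<and> (w \<noteq> [] \<longrightarrow> m \<noteq> [] \<and> hd m = fst (hd w)) \<and>
     (\<forall>m'. adjd m' \<and> length m' > length m \<longrightarrow> Phi w m' = 0)"
  using assms
proof (induction "length w" arbitrary: w rule: less_induct)
  case less
  show ?case
  proof (cases w)
    case Nil
    then show ?thesis by (intro exI[of _ "[]"]) (auto simp: sone_def)
  next
    case (Cons x w1)
    define n where "n = length (takeWhile (\<lambda>z. z = x) w)"
    define w2 where "w2 = dropWhile (\<lambda>z. z = x) w"
    have tw: "takeWhile (\<lambda>z. z = x) w = replicate n x"
    proof -
      have "\<forall>y\<in>set (takeWhile (\<lambda>z. z = x) w). y = x" by (auto dest: set_takeWhileD)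
      then show ?thesis unfolding n_def by (simp add: replicate_length_same)
    qed
    have wdec: "w = replicate n x @ w2" unfolding w2_def using tw takeWhile_dropWhile_id by metis
    have n1: "n \<ge> 1" unfolding n_def using Cons by simp
    have w2hd: "w2 \<noteq> [] \<Longrightarrow> fst (hd w2) \<noteq> fst x"
    proof -
      assume ne: "w2 \<noteq> []"
      have "hd w2 \<noteq> x" using hd_dropWhile[of "\<lambda>z. z = x" w] ne unfolding w2_def by simp
      moreover have "hd w2 \<noteq> flp x"
      proof -
        have "red (replicate n x @ w2)" using less.prems wdec by simp
        moreover have "replicate n x \<noteq> []" "last (replicate n x) = x" using n1 by auto
        ultimately show ?thesis using ne by (simp only: red_append) simp
      qed
      ultimately show ?thesis by (cases x, cases "hd w2") (auto simp: flp_def)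
    qed
    have lw2: "length w2 < length w" using wdec n1 by simp
    have rw2: "red w2" using less.prems wdec red_appendD2 by metis
    obtain m2 where m2: "adjd m2" "set m2 \<subseteq> fst ` set w2" "Phi w2 m2 \<noteq> 0"
      "w2 \<noteq> [] \<longrightarrow> m2 \<noteq> [] \<and> hd m2 = fst (hd w2)"
      "\<forall>m'. adjd m' \<and> length m' > length m2 \<longrightarrow> Phi w2 m' = 0"
      using less.hyps[OF lw2 rw2] by blast
    have m2e: "w2 = [] \<Longrightarrow> m2 = []" using m2(3) by (auto simp: sone_def split: if_splits)
    let ?s = "fst x"
    let ?U = "Phi (replicate n x)" and ?V = "Phi w2"
    have PW: "Phi w = smul ?U ?V" using wdec Phi_append by metis
    have ad: "adjd (?s # m2)" using m2 m2e w2hd by (cases "w2 = []") (auto simp: adjd_Cons)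
    have U0: "?U [] = 1" by (rule Phi_const)
    have Us: "?U [?s] \<noteq> 0" using Phi_rep_s[of n x] n1 by auto
    have "Phi w (?s # m2) = ?U [] * ?V (?s # m2) + ?U [?s] * ?V m2"
      using smul_upow_adjd[OF Phi_rep_upow ad] PW by simp
    also have "?V (?s # m2) = 0" using m2(5) ad by simp
    finally have nz: "Phi w (?s # m2) \<noteq> 0" using Us m2(3) by simp
    have zero: "\<forall>m'. adjd m' \<and> length m' > length (?s # m2) \<longrightarrow> Phi w m' = 0"
    proof (intro allI impI)
      fix m' :: "'a list" assume h: "adjd m' \<and> length m' > length (?s # m2)"
      have a1: "?V m' = 0" using h m2(5) by simp
      have "adjd (tl m')" using h by (cases m') (auto simp: adjd_Cons)
      then have a2: "?V (tl m') = 0" using h m2(5) by (cases m') auto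
      show "Phi w m' = 0" using smul_upow_adjd[OF Phi_rep_upow[of x n], where m="m'" and V="?V"] h PW a1 a2 by simp
    qed
    have "set (?s # m2) \<subseteq> fst ` set w" using m2(2) wdec Cons n1 by auto
    then show ?thesis using nz zero ad Cons by (intro exI[of _ "?s # m2"]) auto
  qed
qed

locale fgrpf = fgrp + assumes finS: "finite S"
begin

definition kap :: "'a list \<Rightarrow> nat \<times> nat" where
  "kap m = (length m, to_nat_on (lists S) m)"

definition pos :: "('a list \<Rightarrow> int) \<Rightarrow> bool" where
  "pos f \<longleftrightarrow> (\<exists>m0\<in>lists S. f m0 > 0 \<and> (\<forall>m\<in>lists S. kap m < kap m0 \<longrightarrow> f m = 0))"

lemma kap_inj: "m1 \<in> lists S \<Longrightarrow> m2 \<in> lists S \<Longrightarrow> kap m1 = kap m2 \<Longrightarrow> m1 = m2"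
proof -
  assume a: "m1 \<in> lists S" "m2 \<in> lists S" "kap m1 = kap m2"
  have "countable (lists S)" using finS by (simp add: countable_finite)
  then have "inj_on (to_nat_on (lists S)) (lists S)" by (rule inj_on_to_nat_on)
  then show "m1 = m2" using a by (auto simp: kap_def inj_on_def)
qed

lemma kap_len: "length m < length m0 \<Longrightarrow> kap m < kap m0"
  by (simp add: kap_def)

lemma kap_le_len: "kap m \<le> kap m0 \<Longrightarrow> length m \<le> length m0"
  by (auto simp: kap_def less_eq_prod_def)

lemma pos_below: "m0 \<in> lists S \<Longrightarrow> (\<forall>m\<in>lists S. kap m < kap m0 \<longrightarrow> f m = 0) \<Longrightarrow>
   (\<forall>m\<in>lists S. length m < length m0 \<longrightarrow> f m = 0)"
  using kap_len by blast

lemma pos_or_neg: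
  assumes "\<exists>m\<in>lists S. f m \<noteq> 0"
  shows "pos f \<or> pos (\<lambda>m. - f m)"
proof -
  define k where "k = (LEAST k. \<exists>m\<in>lists S. f m \<noteq> 0 \<and> kap m = k)"
  have ex: "\<exists>k. \<exists>m\<in>lists S. f m \<noteq> 0 \<and> kap m = k" using assms by blast
  have "\<exists>m\<in>lists S. f m \<noteq> 0 \<and> kap m = k"
    unfolding k_def by (rule LeastI_ex[OF ex])
  then obtain m0 where m0: "m0 \<in> lists S" "f m0 \<noteq> 0" "kap m0 = k" by blast
  have below: "\<forall>m\<in>lists S. kap m < kap m0 \<longrightarrow> f m = 0"
  proof (intro ballI impI)
    fix m assume mm: "m \<in> lists S" "kap m < kap m0"
    have "\<not> (\<exists>m'\<in>lists S. f m' \<noteq> 0 \<and> kap m' = kap m)"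
      using not_less_Least[of "kap m" "\<lambda>k. \<exists>m\<in>lists S. f m \<noteq> 0 \<and> kap m = k"] mm(2) m0(3)
      unfolding k_def by simp
    then show "f m = 0" using mm(1) by blast
  qed
  show ?thesis
  proof (cases "f m0 > 0")
    case True
    have "pos f" unfolding pos_def by (rule bexI[of _ m0]) (use True below m0 in auto)
    then show ?thesis ..
  next
    case False
    then have "- f m0 > 0" using m0 by simp
    have "pos (\<lambda>m. - f m)" unfolding pos_def by (rule bexI[of _ m0]) (use \<open>- f m0 > 0\<close> below m0 in auto)
    then show ?thesis ..
  qed
qed

lemma not_pos_both: "\<not> (pos f \<and> pos (\<lambda>m. - f m))"
proof
  assume "pos f \<and> pos (\<lambda>m. - f m)"
  then obtain m1 m2 where a: "m1 \<in> lists S" "f m1 > 0" "\<forall>m\<in>lists S. kap m < kap m1 \<longrightarrow> f m = 0"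
    and b: "m2 \<in> lists S" "- f m2 > 0" "\<forall>m\<in>lists S. kap m < kap m2 \<longrightarrow> - f m = 0"
    unfolding pos_def by blast
  consider "kap m1 < kap m2" | "kap m2 < kap m1" | "kap m1 = kap m2" using less_linear by blast
  then show False
  proof cases
    case 1 then have "- f m1 = 0" using a(1) b(3) by blast
    then show ?thesis using a by simp
  next
    case 2 then have "f m2 = 0" using b(1) a(3) by blast
    then show ?thesis using b by simp
  next
    case 3 then have "m1 = m2" using kap_inj a b by blast
    then show ?thesis using a b by simp
  qed
qed

lemma smul_zero_below_right:
  "(\<forall>m\<in>lists S. length m < b \<longrightarrow> g m = 0) \<Longrightarrow> m \<in> lists S \<Longrightarrow> length m < b \<Longrightarrow> smul f g m = 0"
  by (induction m arbitrary: f) auto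

lemma smul_zero_below:
  "(\<forall>m\<in>lists S. length m < a \<longrightarrow> f m = 0) \<Longrightarrow> (\<forall>m\<in>lists S. length m < b \<longrightarrow> g m = 0) \<Longrightarrow>
   m \<in> lists S \<Longrightarrow> length m < a + b \<Longrightarrow> smul f g m = 0"
proof (induction m arbitrary: f a)
  case Nil then show ?case by (cases a) auto
next
  case (Cons x m)
  show ?case
  proof (cases a)
    case 0
    then show ?thesis using smul_zero_below_right[of b g "x # m" f] Cons.prems by simp
  next
    case (Suc a')
    have f0: "f [] = 0" using Cons.prems Suc by auto
    have "\<forall>m'\<in>lists S. length m' < a' \<longrightarrow> f (x # m') = 0" using Cons.prems Suc by auto
    then have "smul (\<lambda>m'. f (x # m')) g m = 0" using Cons.IH[of a' "\<lambda>m'. f (x # m')"] Cons.prems Suc by auto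
    then show ?thesis using f0 by simp
  qed
qed

lemma pos_mult:
  assumes f0: "f [] = 0" and g0: "g [] = 0" and pf: "pos f" and pg: "pos g"
  shows "pos (\<lambda>m. f m + g m + smul f g m)"
proof -
  obtain m1 where a: "m1 \<in> lists S" "f m1 > 0" "\<forall>m\<in>lists S. kap m < kap m1 \<longrightarrow> f m = 0"
    using pf unfolding pos_def by blast
  obtain m2 where b: "m2 \<in> lists S" "g m2 > 0" "\<forall>m\<in>lists S. kap m < kap m2 \<longrightarrow> g m = 0"
    using pg unfolding pos_def by blast
  have fb: "\<forall>m\<in>lists S. length m < length m1 \<longrightarrow> f m = 0" using pos_below a by blast
  have gb: "\<forall>m\<in>lists S. length m < length m2 \<longrightarrow> g m = 0" using pos_below b by blast
  have fb1: "\<forall>m\<in>lists S. length m < 1 \<longrightarrow> f m = 0" using f0 by auto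
  have gb1: "\<forall>m\<in>lists S. length m < 1 \<longrightarrow> g m = 0" using g0 by auto
  have sm: "smul f g m = 0" if "m \<in> lists S" "length m \<le> length m1 \<or> length m \<le> length m2" for m
    using that smul_zero_below[OF fb gb1 that(1)] smul_zero_below[OF fb1 gb that(1)] by auto
  show ?thesis
  proof (cases "kap m1 \<le> kap m2")
    case le: True
    have gm1: "g m1 \<ge> 0"
    proof (cases "kap m1 < kap m2")
      case True then show ?thesis using b a by auto
    next
      case False then have "m1 = m2" using le kap_inj a b by (metis order_le_less)
      then show ?thesis using b by simp
    qed
    show ?thesis unfolding pos_def
    proof (intro bexI[of _ m1] conjI ballI impI)
      show "f m1 + g m1 + smul f g m1 > 0" using a gm1 sm[of m1] by simp
      fix m assume m: "m \<in> lists S" "kap m < kap m1"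
      then show "f m + g m + smul f g m = 0" using a b sm[of m] le kap_le_len[of m m1] by auto
    qed (use a in auto)
  next
    case False
    then have le: "kap m2 < kap m1" by auto
    show ?thesis unfolding pos_def
    proof (intro bexI[of _ m2] conjI ballI impI)
      show "f m2 + g m2 + smul f g m2 > 0" using a b le sm[of m2] by simp
      fix m assume m: "m \<in> lists S" "kap m < kap m2"
      then show "f m + g m + smul f g m = 0" using a b sm[of m] le kap_le_len[of m m2] by auto
    qed (use b in auto)
  qed
qed

lemma pos_inv:
  assumes f0: "f [] = 0" and g0: "g [] = 0" and fg: "\<And>m. f m + g m + smul f g m = 0" and pf: "pos f"
  shows "pos (\<lambda>m. - g m)"
proof -
  obtain m1 where a: "m1 \<in> lists S" "f m1 > 0" "\<forall>m\<in>lists S. kap m < kap m1 \<longrightarrow> f m = 0"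
    using pf unfolding pos_def by blast
  have fb: "\<forall>m\<in>lists S. length m < length m1 \<longrightarrow> f m = 0" using pos_below a by blast
  have gb1: "\<forall>m\<in>lists S. length m < 1 \<longrightarrow> g m = 0" using g0 by auto
  have e: "- g m = f m" if "m \<in> lists S" "kap m \<le> kap m1" for m
    using smul_zero_below[OF fb gb1 that(1)] kap_le_len[OF that(2)] fg[of m] by simp
  show ?thesis unfolding pos_def
    using a e by (intro bexI[of _ m1]) auto
qed

end

context fgrpf
begin

lemma pos_inv2:
  assumes f0: "f [] = 0" and g0: "g [] = 0" and fg: "\<And>m. f m + g m + smul f g m = 0" and pf: "pos (\<lambda>m. - f m)"
  shows "pos g"
proof -
  obtain m1 where a: "m1 \<in> lists S" "- f m1 > 0" "\<forall>m\<in>lists S. kap m < kap m1 \<longrightarrow> - f m = 0"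
    using pf unfolding pos_def by blast
  have "\<forall>m\<in>lists S. length m < length m1 \<longrightarrow> - f m = 0" using pos_below[OF a(1) a(3)] .
  then have fb: "\<forall>m\<in>lists S. length m < length m1 \<longrightarrow> f m = 0" by simp
  have gb1: "\<forall>m\<in>lists S. length m < 1 \<longrightarrow> g m = 0" using g0 by auto
  have e: "g m = - f m" if "m \<in> lists S" "kap m \<le> kap m1" for m
    using smul_zero_below[OF fb gb1 that(1)] kap_le_len[OF that(2)] fg[of m] by simp
  show ?thesis unfolding pos_def
  proof (intro bexI[of _ m1] conjI ballI impI)
    show "g m1 > 0" using e[of m1] a by simp
    fix m assume "m \<in> lists S" "kap m < kap m1"
    then show "g m = 0" using e[of m] a(3) by simp
  qed (rule a(1))
qed

definition psi :: "'a \<Rightarrow> 'a list \<Rightarrow> int" where "psi x = Phi (nf x)"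
definition DD :: "'a \<Rightarrow> 'a list \<Rightarrow> int" where "DD x = (\<lambda>m. psi x m - sone m)"

lemma psi_mult: assumes "x \<in> carrier G" "y \<in> carrier G" shows "psi (x \<otimes> y) = smul (psi x) (psi y)"
proof -
  obtain \<alpha> \<gamma> \<beta> where h: "nf x = \<alpha> @ \<gamma>" "nf y = winv \<gamma> @ \<beta>" "nf (x \<otimes> y) = \<alpha> @ \<beta>"
    using nf_mult[OF assms] by blast
  have "smul (psi x) (psi y) = smul (smul (Phi \<alpha>) (Phi \<gamma>)) (smul (Phi (winv \<gamma>)) (Phi \<beta>))"
    by (simp add: psi_def h Phi_append)
  also have "\<dots> = smul (Phi \<alpha>) (smul (Phi (\<gamma> @ winv \<gamma>)) (Phi \<beta>))"
    by (simp add: Phi_append smul_assoc')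
  also have "\<dots> = Phi (\<alpha> @ \<beta>)" by (simp only: Phi_cancel smul_one_left') (simp only: Phi_append)
  finally show ?thesis by (simp add: psi_def h)
qed

lemma psi_DD: "psi x = (\<lambda>m. DD x m + sone m)" by (simp add: DD_def)

lemma DD_mult: assumes "x \<in> carrier G" "y \<in> carrier G"
  shows "DD (x \<otimes> y) m = DD x m + DD y m + smul (DD x) (DD y) m"
proof -
  have "psi (x \<otimes> y) m = smul (\<lambda>m. DD x m + sone m) (\<lambda>m. DD y m + sone m) m"
    using psi_mult[OF assms] psi_DD[of x] psi_DD[of y] by simp
  also have "\<dots> = smul (DD x) (DD y) m + DD x m + DD y m + sone m"
    by (simp add: smul_add_left smul_add_right smul_one_left smul_one_right)
  finally show ?thesis by (simp add: DD_def)
qed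

lemma DD0: "DD x [] = 0" by (simp add: DD_def psi_def Phi_const sone_def)

lemma DD_one: "DD \<one> = (\<lambda>_. 0)" by (simp add: DD_def psi_def fun_eq_iff)

lemma magnus: assumes "x \<in> carrier G" "x \<noteq> \<one>" shows "\<exists>m\<in>lists S. DD x m \<noteq> 0"
proof -
  have ne: "nf x \<noteq> []" using nf_Nil_iff assms by blast
  obtain m where m: "set m \<subseteq> fst ` set (nf x)" "Phi (nf x) m \<noteq> 0" "m \<noteq> []"
    using magnus_aux[OF nf_props(1)[OF assms(1)]] ne by blast
  have "m \<in> lists S" using m(1) nf_props(2)[OF assms(1)] by (auto simp: wS_def)
  moreover have "DD x m \<noteq> 0" using m by (simp add: DD_def psi_def sone_def)
  ultimately show ?thesis by blast
qed

definition P0 :: "'a set" where "P0 = {x \<in> carrier G. pos (DD x)}"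

lemma inv_rel: assumes "x \<in> carrier G" shows "\<And>m. DD x m + DD (inv x) m + smul (DD x) (DD (inv x)) m = 0"
  using DD_mult[OF assms inv_closed[OF assms]] assms by (simp add: DD_one)

lemma inv_rel2: assumes "x \<in> carrier G" shows "\<And>m. DD (inv x) m + DD x m + smul (DD (inv x)) (DD x) m = 0"
  using DD_mult[OF inv_closed[OF assms] assms] assms by (simp add: DD_one)

lemma P0_carrier: "x \<in> P0 \<Longrightarrow> x \<in> carrier G" by (simp add: P0_def)

lemma P0_mult: assumes "x \<in> P0" "y \<in> P0" shows "x \<otimes> y \<in> P0"
proof -
  have c: "x \<in> carrier G" "y \<in> carrier G" and p: "pos (DD x)" "pos (DD y)"
    using assms by (simp_all add: P0_def)
  have "pos (\<lambda>m. DD x m + DD y m + smul (DD x) (DD y) m)" using pos_mult[OF DD0 DD0 p] .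
  moreover have "(\<lambda>m. DD x m + DD y m + smul (DD x) (DD y) m) = DD (x \<otimes> y)"
    using DD_mult[OF c] by (simp add: fun_eq_iff)
  ultimately show ?thesis using c by (simp add: P0_def)
qed

lemma P0_cover: assumes c: "x \<in> carrier G" and ne: "x \<noteq> \<one>" shows "x \<in> P0 \<or> inv x \<in> P0"
proof -
  have "pos (DD x) \<or> pos (\<lambda>m. - DD x m)" using pos_or_neg[OF magnus[OF c ne]] .
  then show ?thesis
  proof
    assume "pos (DD x)" then show ?thesis using c by (simp add: P0_def)
  next
    assume "pos (\<lambda>m. - DD x m)"
    then have "pos (DD (inv x))" using pos_inv2[OF DD0 DD0 inv_rel[OF c]] by simp
    then show ?thesis using c by (simp add: P0_def)
  qed
qed

lemma P0_disj: assumes "y \<in> P0" shows "inv y \<notin> P0"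
proof
  assume "inv y \<in> P0"
  have c: "y \<in> carrier G" and p: "pos (DD y)" using assms by (simp_all add: P0_def)
  have p2: "pos (DD (inv y))" using \<open>inv y \<in> P0\<close> by (simp add: P0_def)
  have "pos (\<lambda>m. - DD (inv y) m)" using pos_inv[OF DD0 DD0 inv_rel[OF c] p] .
  then show False using p2 not_pos_both by blast
qed

lemma one_notin_P0: "\<one> \<notin> P0"
proof -
  have "\<not> pos (DD \<one>)" by (simp add: DD_one pos_def)
  then show ?thesis by (simp add: P0_def)
qed

lemma P0_cone: "positive_cone G P0"
proof -
  have A: "P0 \<subseteq> carrier G" using P0_carrier by blast
  have B: "\<forall>x\<in>P0. \<forall>y\<in>P0. x \<otimes> y \<in> P0" using P0_mult by blast
  have C1: "m_inv G ` P0 \<subseteq> carrier G"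
  proof
    fix x assume "x \<in> m_inv G ` P0"
    then obtain y where "y \<in> P0" "x = inv y" by (rule imageE) simp
    then show "x \<in> carrier G" using P0_carrier inv_closed by simp
  qed
  have C2: "carrier G \<subseteq> P0 \<union> m_inv G ` P0 \<union> {\<one>}"
  proof
    fix x assume c: "x \<in> carrier G"
    show "x \<in> P0 \<union> m_inv G ` P0 \<union> {\<one>}"
    proof (cases "x = \<one>")
      case False
      then have "x \<in> P0 \<or> inv x \<in> P0" using P0_cover c by blast
      then show ?thesis
      proof
        assume "x \<in> P0" then show ?thesis by simp
      next
        assume i: "inv x \<in> P0"
        have "x = inv (inv x)" using c by simp
        then have "x \<in> m_inv G ` P0" using i by (rule image_eqI)
        then show ?thesis by simp
      qed
    qed simp
  qed
  have C: "carrier G = P0 \<union> m_inv G ` P0 \<union> {\<one>}"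
    using A C1 C2 by blast
  have D: "P0 \<inter> m_inv G ` P0 = {}"
  proof (rule equals0I)
    fix x assume "x \<in> P0 \<inter> m_inv G ` P0"
    then have x: "x \<in> P0" "x \<in> m_inv G ` P0" by simp_all
    obtain y where y: "y \<in> P0" "x = inv y" using x(2) by (rule imageE) simp
    then show False using P0_disj x(1) by blast
  qed
  have E: "\<one> \<notin> P0" by (rule one_notin_P0)
  have F: "\<one> \<notin> m_inv G ` P0"
  proof
    assume "\<one> \<in> m_inv G ` P0"
    then obtain y where y: "y \<in> P0" "\<one> = inv y" by (rule imageE) simp
    then have "y \<in> carrier G" by (simp add: P0_def)
    then have "y = \<one>" using y(2) inv_eq_1_iff by metis
    then show False using y(1) one_notin_P0 by simp
  qed
  show ?thesis unfolding positive_cone_def using A B C D E F by blast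
qed

lemma left_orderable: "left_orderable G"
  using P0_cone by (auto simp: left_orderable_def)

end

context fgrp
begin

lemma letters_gen:
  assumes T0: "T0 \<subseteq> carrier G" and x: "x \<in> generate G T0"
  shows "fst ` set (nf x) \<subseteq> (\<Union>t\<in>T0. fst ` set (nf t))"
  using x
proof (induction rule: generate.induct)
  case one then show ?case by simp
next
  case (incl h) then show ?case by blast
next
  case (inv h)
  have "h \<in> carrier G" using inv T0 by blast
  then have "fst ` set (nf (inv h)) = fst ` set (nf h)" by (simp add: nf_inv)
  then show ?case using inv by blast
next
  case (eng h1 h2)
  have c: "h1 \<in> carrier G" "h2 \<in> carrier G"
    using eng.hyps generate_in_carrier[OF T0] by auto
  obtain \<alpha> \<gamma> \<beta> where h: "nf h1 = \<alpha> @ \<gamma>" "nf h2 = winv \<gamma> @ \<beta>" "nf (h1 \<otimes> h2) = \<alpha> @ \<beta>"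
    using nf_mult[OF c] by blast
  have "fst ` set \<alpha> \<subseteq> fst ` set (nf h1)" "fst ` set \<beta> \<subseteq> fst ` set (nf h2)" using h by auto
  then have "fst ` set (nf (h1 \<otimes> h2)) \<subseteq> fst ` set (nf h1) \<union> fst ` set (nf h2)"
    using h(3) by (simp add: image_Un) blast
  then show ?case using eng.IH by blast
qed

lemma finite_S:
  assumes "finitely_generated G" shows "finite S"
proof -
  obtain T0 where T0: "finite T0" "T0 \<subseteq> carrier G" "generate G T0 = carrier G"
    using assms by (auto simp: finitely_generated_def)
  have "S \<subseteq> (\<Union>t\<in>T0. fst ` set (nf t))"
  proof
    fix s assume s: "s \<in> S"
    then have sc: "s \<in> carrier G" using S_carrier by blast
    have "nf s = [(s, True)]"
      using nf_eval[of "[(s, True)]"] s sc by (simp add: ltr_def)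
    then show "s \<in> (\<Union>t\<in>T0. fst ` set (nf t))"
      using letters_gen[OF T0(2), of s] T0(3) sc by auto
  qed
  moreover have "finite (\<Union>t\<in>T0. fst ` set (nf t))" using T0(1) by auto
  ultimately show ?thesis by (rule finite_subset)
qed

lemma comm_gen1:
  assumes a: "a \<in> carrier G" and x: "x \<in> generate G {a}"
  shows "x \<otimes> a = a \<otimes> x"
  using x
proof (induction rule: generate.induct)
  case one then show ?case using a by simp
next
  case (incl h) then show ?case by simp
next
  case (inv h)
  then have "h = a" by simp
  then show ?case using a by (simp add: inv_comm)
next
  case (eng h1 h2)
  have c: "h1 \<in> carrier G" "h2 \<in> carrier G"
    using eng.hyps generate_in_carrier[of "{a}"] a by auto
  have "h1 \<otimes> h2 \<otimes> a = h1 \<otimes> (a \<otimes> h2)" using c a eng.IH by (simp add: m_assoc)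
  also have "\<dots> = a \<otimes> (h1 \<otimes> h2)" using c a eng.IH by (simp add: m_assoc[symmetric])
  finally show ?case .
qed

lemma comm_gen2:
  assumes a: "a \<in> carrier G" and y: "y \<in> generate G {a}" and x: "x \<in> generate G {a}"
  shows "x \<otimes> y = y \<otimes> x"
  using y
proof (induction rule: generate.induct)
  case one then show ?case using x generate_in_carrier[of "{a}"] a by auto
next
  case (incl h) then show ?case using comm_gen1[OF a x] by simp
next
  case (inv h)
  have xc: "x \<in> carrier G" using x generate_in_carrier[of "{a}"] a by auto
  have e: "x \<otimes> a = a \<otimes> x" using comm_gen1[OF a x] .
  have "h = a" using inv by simp
  have "x \<otimes> inv a = inv a \<otimes> (a \<otimes> x) \<otimes> inv a" using a xc by (simp add: m_assoc[symmetric])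
  also have "\<dots> = inv a \<otimes> (x \<otimes> a) \<otimes> inv a" using e by simp
  also have "\<dots> = inv a \<otimes> x" using a xc by (simp add: m_assoc)
  finally show ?case using \<open>h = a\<close> by simp
next
  case (eng h1 h2)
  have c: "h1 \<in> carrier G" "h2 \<in> carrier G"
    using eng.hyps generate_in_carrier[of "{a}"] a by auto
  have xc: "x \<in> carrier G" using x generate_in_carrier[of "{a}"] a by auto
  have "x \<otimes> (h1 \<otimes> h2) = h1 \<otimes> x \<otimes> h2" using c xc eng.IH by (simp add: m_assoc[symmetric])
  also have "\<dots> = h1 \<otimes> h2 \<otimes> x" using c xc eng.IH by (simp add: m_assoc)
  finally show ?case .
qed

lemma two_gens:
  assumes "\<not> comm_group G"
  shows "\<exists>a\<in>S. \<exists>b\<in>S. a \<noteq> b"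
proof (rule ccontr)
  assume "\<not> ?thesis"
  then obtain a where a: "a \<in> carrier G" "S \<subseteq> {a}"
    using S_carrier by (cases "S = {}") auto
  have "carrier G \<subseteq> generate G {a}" using gen_S mono_generate[OF a(2)] by simp
  then have "comm_group G" using comm_gen2[OF a(1)] by (intro group_comm_groupI) blast
  then show False using assms by simp
qed

lemma ltr_ne_one: "fst x \<in> S \<Longrightarrow> ltr G x \<noteq> \<one>"
  using no_rel[of "[x]"] by simp

end

context fgrp
begin

lemma foldr_mult_gen: "set xs \<subseteq> carrier G \<Longrightarrow> z \<in> carrier G \<Longrightarrow>
    foldr (\<otimes>) xs z = foldr (\<otimes>) xs \<one> \<otimes> z \<and> foldr (\<otimes>) xs \<one> \<in> carrier G"
  by (induction xs) (auto simp: m_assoc)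

lemma gen_list:
  assumes T: "T \<subseteq> carrier G" "m_inv G ` T = T" and x: "x \<in> generate G T"
  shows "\<exists>xs. set xs \<subseteq> T \<and> foldr (\<otimes>) xs \<one> = x"
  using x
proof (induction rule: generate.induct)
  case one then show ?case by (intro exI[of _ "[]"]) simp
next
  case (incl h) then show ?case using T by (intro exI[of _ "[h]"]) auto
next
  case (inv h)
  have "inv h \<in> T" using inv T(2) by blast
  then show ?case using inv T by (intro exI[of _ "[inv h]"]) auto
next
  case (eng h1 h2)
  obtain xs1 xs2 where a: "set xs1 \<subseteq> T" "foldr (\<otimes>) xs1 \<one> = h1" "set xs2 \<subseteq> T" "foldr (\<otimes>) xs2 \<one> = h2"
    using eng.IH by blast
  have "foldr (\<otimes>) (xs1 @ xs2) \<one> = foldr (\<otimes>) xs1 (foldr (\<otimes>) xs2 \<one>)" by simp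
  also have "\<dots> = h1 \<otimes> h2" using foldr_mult_gen[of xs1 "foldr (\<otimes>) xs2 \<one>"] foldr_mult_gen[of xs2 \<one>] a T
    by auto
  finally show ?case using a by (intro exI[of _ "xs1 @ xs2"]) auto
qed

lemma len_foldr:
  assumes "set xs \<subseteq> T" "T \<subseteq> carrier G" "\<forall>t\<in>T. len t \<le> C"
  shows "len (foldr (\<otimes>) xs \<one>) \<le> C * length xs"
  using assms(1)
proof (induction xs)
  case Nil then show ?case by (simp add: len_def)
next
  case (Cons x xs)
  have xc: "x \<in> carrier G" using Cons.prems assms(2) by auto
  have fc: "foldr (\<otimes>) xs \<one> \<in> carrier G" using foldr_mult_gen[of xs \<one>] Cons.prems assms(2) by auto
  have "len (foldr (\<otimes>) (x # xs) \<one>) \<le> len x + len (foldr (\<otimes>) xs \<one>)" using len_mult[OF xc fc] by simp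
  also have "\<dots> \<le> C + C * length xs" using Cons assms(3) by (intro add_mono) auto
  finally show ?case by simp
qed

lemma dist_len:
  assumes T: "T \<subseteq> carrier G" "m_inv G ` T = T" "generate G T = carrier G" and C: "\<forall>t\<in>T. len t \<le> C"
    and xy: "x \<in> carrier G" "y \<in> carrier G" and d: "word_dist G T x y \<le> r"
  shows "len (inv x \<otimes> y) \<le> C * r"
proof -
  let ?z = "inv x \<otimes> y"
  have zc: "?z \<in> generate G T" using xy T(3) by simp
  obtain xs where xs: "set xs \<subseteq> T" "foldr (\<otimes>) xs \<one> = ?z" using gen_list[OF T(1,2) zc] by blast
  let ?P = "\<lambda>n. \<exists>xs. length xs = n \<and> set xs \<subseteq> T \<and> foldr (\<otimes>) xs \<one> = ?z"
  have ex: "\<exists>n. ?P n" using xs by blast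
  obtain ys where ys: "length ys = (LEAST n. ?P n)" "set ys \<subseteq> T" "foldr (\<otimes>) ys \<one> = ?z"
    using LeastI_ex[OF ex] by blast
  have "length ys \<le> r" using d ys(1) by (simp add: word_dist_def word_length_def)
  moreover have "len ?z \<le> C * length ys" using len_foldr[OF ys(2) T(1) C] ys(3) by simp
  ultimately show ?thesis by (meson le_trans mult_le_mono2)
qed

lemma branch:
  assumes "a \<in> carrier G" "b \<in> carrier G" "R < len a" "R < len b" "len (inv a \<otimes> b) \<le> R"
  shows "hd (nf a) = hd (nf b)"
proof (rule ccontr)
  assume ne: "hd (nf a) \<noteq> hd (nf b)"
  have "nf a \<noteq> []" "nf b \<noteq> []" using assms(3,4) by (auto simp: len_def)
  then have "nf (inv a \<otimes> b) = winv (nf a) @ nf b" using nf_inv_mult_diff assms(1,2) ne by blast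
  then have "len (inv a \<otimes> b) = len a + len b" by (simp add: len_def)
  then show False using assms by simp
qed

lemma r_path_Cons2: "r_path G T r (x # y # w) \<longleftrightarrow> x \<in> carrier G \<and> word_dist G T x y \<le> r \<and> r_path G T r (y # w)"
  unfolding r_path_def using adj_Cons[where Q="\<lambda>a b. word_dist G T a b \<le> r" and x=x and y=y and w=w]
  by auto

lemma inv_shift: "g \<in> carrier G \<Longrightarrow> x \<in> carrier G \<Longrightarrow> y \<in> carrier G \<Longrightarrow>
    inv (inv g \<otimes> x) \<otimes> (inv g \<otimes> y) = inv x \<otimes> y"
  by (simp add: inv_mult_group m_assoc[symmetric]) (simp add: m_assoc)

lemma path_branch:
  assumes g: "g \<in> carrier G"
    and D: "\<And>x y. x \<in> carrier G \<Longrightarrow> y \<in> carrier G \<Longrightarrow> word_dist G T x y \<le> r \<Longrightarrow> len (inv x \<otimes> y) \<le> R"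
    and p: "r_path G T r p"
    and av: "set p \<inter> ((\<otimes>) g ` {b \<in> carrier G. len b \<le> R}) = {}"
  shows "R < len (inv g \<otimes> hd p) \<and> hd (nf (inv g \<otimes> hd p)) = hd (nf (inv g \<otimes> last p))"
proof -
  have far: "R < len (inv g \<otimes> z)" if "z \<in> set p" for z
  proof (rule ccontr)
    assume "\<not> R < len (inv g \<otimes> z)"
    moreover have zc: "z \<in> carrier G" using p that by (auto simp: r_path_def)
    ultimately have "inv g \<otimes> z \<in> {b \<in> carrier G. len b \<le> R}" using g by simp
    moreover have "z = g \<otimes> (inv g \<otimes> z)" using g zc by (simp add: m_assoc[symmetric])
    ultimately have "z \<in> (\<otimes>) g ` {b \<in> carrier G. len b \<le> R}" by (rule rev_image_eqI)
    then show False using av that by blast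
  qed
  have "p \<noteq> []" using p by (simp add: r_path_def)
  have main: "\<And>q. r_path G T r q \<Longrightarrow> set q \<subseteq> set p \<Longrightarrow> hd (nf (inv g \<otimes> hd q)) = hd (nf (inv g \<otimes> last q))"
  proof -
    fix q show "r_path G T r q \<Longrightarrow> set q \<subseteq> set p \<Longrightarrow> hd (nf (inv g \<otimes> hd q)) = hd (nf (inv g \<otimes> last q))"
    proof (induction q rule: adjd.induct)
      case 1 then show ?case by (simp add: r_path_def)
    next
      case (2 x) then show ?case by simp
    next
      case (3 x y w)
      have r: "x \<in> carrier G" "word_dist G T x y \<le> r" "r_path G T r (y # w)"
        using 3(2) r_path_Cons2 by blast+
      have yc: "y \<in> carrier G" using r(3) by (simp add: r_path_def)
      have ih: "hd (nf (inv g \<otimes> y)) = hd (nf (inv g \<otimes> last (y # w)))"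
        using 3(1)[OF r(3)] 3(3) by simp
      have "len (inv (inv g \<otimes> x) \<otimes> (inv g \<otimes> y)) \<le> R"
        using D[OF r(1) yc r(2)] inv_shift[OF g r(1) yc] by simp
      then have "hd (nf (inv g \<otimes> x)) = hd (nf (inv g \<otimes> y))"
        using branch[of "inv g \<otimes> x" "inv g \<otimes> y" R] far[of x] far[of y] 3(3) g r(1) yc by simp
      then show ?case using ih by simp
    qed
  qed
  show ?thesis using main[OF p] far[of "hd p"] \<open>p \<noteq> []\<close> by simp
qed

definition QQ :: "'a set \<Rightarrow> 'a set" where
  "QQ Y = {eval_word G p | p. \<exists>z\<in>Y \<union> m_inv G ` Y \<union> {\<one>}. \<exists>rr. nf z = p @ rr}"

lemma QQ_finite: assumes "finite Y" shows "finite (QQ Y)"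
proof -
  let ?Z = "Y \<union> m_inv G ` Y \<union> {\<one>}"
  have "QQ Y \<subseteq> (\<Union>z\<in>?Z. (\<lambda>k. eval_word G (take k (nf z))) ` {..length (nf z)})"
  proof
    fix x assume "x \<in> QQ Y"
    then obtain p where "x = eval_word G p" "\<exists>z\<in>?Z. \<exists>rr. nf z = p @ rr" unfolding QQ_def by blast
    then obtain z rr where h: "x = eval_word G p" "z \<in> ?Z" "nf z = p @ rr" by blast
    then have e: "x = eval_word G (take (length p) (nf z))" "length p \<in> {..length (nf z)}" by simp_all
    have "x \<in> (\<lambda>k. eval_word G (take k (nf z))) ` {..length (nf z)}"
      using e(1) e(2) by (rule image_eqI)
    then show "x \<in> (\<Union>z\<in>?Z. (\<lambda>k. eval_word G (take k (nf z))) ` {..length (nf z)})"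
      using h(2) by (rule UN_I[rotated])
  qed
  moreover have "finite (\<Union>z\<in>?Z. (\<lambda>k. eval_word G (take k (nf z))) ` {..length (nf z)})"
    using assms by (intro finite_UN_I) auto
  ultimately show ?thesis by (rule finite_subset)
qed

lemma QQ_carrier: assumes "Y \<subseteq> carrier G" shows "QQ Y \<subseteq> carrier G"
proof
  fix x assume "x \<in> QQ Y"
  then obtain p where "x = eval_word G p" "\<exists>z\<in>Y \<union> m_inv G ` Y \<union> {\<one>}. \<exists>rr. nf z = p @ rr"
    unfolding QQ_def by blast
  then obtain z rr where h: "x = eval_word G p" "z \<in> Y \<union> m_inv G ` Y \<union> {\<one>}" "nf z = p @ rr" by blast
  have "z \<in> carrier G"
  proof -
    consider "z \<in> Y" | "z \<in> m_inv G ` Y" | "z = \<one>" using h(2) by blast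
    then show ?thesis
    proof cases
      case 2 then obtain y where "y \<in> Y" "z = inv y" by (rule imageE) simp
      then show ?thesis using assms by auto
    qed (use assms in auto)
  qed
  then have "wS S (nf z)" by (rule nf_props)
  then have "wS S p" using h(3) by simp
  then show "x \<in> carrier G" using h(1) by simp
qed

lemma prefix_lemma:
  assumes Y: "Y \<subseteq> carrier G" and h: "h \<in> generate G Y"
  shows "\<forall>p rr. nf h = p @ rr \<longrightarrow> (\<exists>h'\<in>generate G Y. \<exists>q\<in>QQ Y. eval_word G p = h' \<otimes> q)"
  using h
proof (induction rule: generate.induct)
  case one
  have "\<one> \<in> QQ Y" unfolding QQ_def by (rule CollectI, rule exI[of _ "[]"]) auto
  moreover have "\<one> \<in> generate G Y" by (rule generate.one)
  ultimately show ?case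
  proof (intro allI impI)
    fix p rr assume "nf \<one> = p @ rr"
    then have "p = []" by simp
    then have "eval_word G p = \<one> \<otimes> \<one>" by simp
    then show "\<exists>h'\<in>generate G Y. \<exists>q\<in>QQ Y. eval_word G p = h' \<otimes> q"
      using \<open>\<one> \<in> QQ Y\<close> \<open>\<one> \<in> generate G Y\<close> by blast
  qed
next
  case (incl g)
  show ?case
  proof (intro allI impI)
    fix p rr assume a: "nf g = p @ rr"
    have gc: "g \<in> carrier G" using incl Y by blast
    have q: "eval_word G p \<in> QQ Y" unfolding QQ_def using incl a by blast
    have "wS S p" using nf_props(2)[OF gc] a by simp
    then have "eval_word G p = \<one> \<otimes> eval_word G p" by simp
    then show "\<exists>h'\<in>generate G Y. \<exists>q\<in>QQ Y. eval_word G p = h' \<otimes> q" using q generate.one by blast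
  qed
next
  case (inv g)
  show ?case
  proof (intro allI impI)
    fix p rr assume a: "nf (inv g) = p @ rr"
    have gc: "inv g \<in> carrier G" using inv Y by blast
    have q: "eval_word G p \<in> QQ Y" unfolding QQ_def using inv a by blast
    have "wS S p" using nf_props(2)[OF gc] a by simp
    then have "eval_word G p = \<one> \<otimes> eval_word G p" by simp
    then show "\<exists>h'\<in>generate G Y. \<exists>q\<in>QQ Y. eval_word G p = h' \<otimes> q" using q generate.one by blast
  qed
next
  case (eng h1 h2)
  have c: "h1 \<in> carrier G" "h2 \<in> carrier G"
    using eng.hyps generate_in_carrier[OF Y] by auto
  obtain \<alpha> \<gamma> \<beta> where h: "nf h1 = \<alpha> @ \<gamma>" "nf h2 = winv \<gamma> @ \<beta>" "nf (h1 \<otimes> h2) = \<alpha> @ \<beta>"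
    using nf_mult[OF c] by blast
  have w: "wS S \<alpha>" "wS S \<gamma>" "wS S \<beta>" using nf_props(2)[OF c(1)] nf_props(2)[OF c(2)] h by auto
  show ?case
  proof (intro allI impI)
    fix p rr assume a: "nf (h1 \<otimes> h2) = p @ rr"
    then have "\<alpha> @ \<beta> = p @ rr" using h(3) by simp
    then obtain us where "(\<alpha> = p @ us \<and> us @ \<beta> = rr) \<or> (\<alpha> @ us = p \<and> \<beta> = us @ rr)"
      by (auto simp: append_eq_append_conv2)
    then show "\<exists>h'\<in>generate G Y. \<exists>q\<in>QQ Y. eval_word G p = h' \<otimes> q"
    proof
      assume b: "\<alpha> = p @ us \<and> us @ \<beta> = rr"
      then have "nf h1 = p @ (us @ \<gamma>)" using h(1) by simp
      then show ?thesis using eng.IH(1) by blast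
    next
      assume b: "\<alpha> @ us = p \<and> \<beta> = us @ rr"
      then have "nf h2 = (winv \<gamma> @ us) @ rr" using h(2) by simp
      then obtain h' q where hq: "h' \<in> generate G Y" "q \<in> QQ Y" "eval_word G (winv \<gamma> @ us) = h' \<otimes> q"
        using eng.IH(2) by blast
      have wu: "wS S us" using w b by simp
      have h'c: "h' \<in> carrier G" using hq(1) generate_in_carrier[OF Y] by blast
      have qc: "q \<in> carrier G" using hq(2) QQ_carrier[OF Y] by blast
      have h1e: "h1 = eval_word G \<alpha> \<otimes> eval_word G \<gamma>"
        using nf_props(3)[OF c(1)] h(1) w by (simp add: eval_append)
      have "eval_word G p = eval_word G \<alpha> \<otimes> eval_word G us" using b w wu by (auto simp: eval_append)
      also have "eval_word G \<alpha> = h1 \<otimes> inv (eval_word G \<gamma>)"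
        using h1e w by (simp add: m_assoc)
      also have "h1 \<otimes> inv (eval_word G \<gamma>) \<otimes> eval_word G us = h1 \<otimes> eval_word G (winv \<gamma> @ us)"
        using w wu c by (simp add: eval_append eval_winv m_assoc)
      also have "\<dots> = (h1 \<otimes> h') \<otimes> q" using hq(3) c h'c qc by (simp add: m_assoc)
      finally have "eval_word G p = (h1 \<otimes> h') \<otimes> q" .
      moreover have "h1 \<otimes> h' \<in> generate G Y" using eng.hyps(1) hq(1) by (rule generate.eng)
      ultimately show ?thesis using hq(2) by blast
    qed
  qed
qed

end

context fgrp
begin

lemma one_QQ: "\<one> \<in> QQ Y"
  unfolding QQ_def by (rule CollectI, rule exI[of _ "[]"]) auto

lemma exists_nonprefix:
  assumes H: "subgroup H G" and Y: "finite Y" "Y \<subseteq> H" "generate G Y = H" and inf: "infinite (rcosets H)"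
  shows "\<exists>y. red y \<and> wS S y \<and> y \<noteq> [] \<and> (\<forall>h\<in>H. \<forall>rr. nf h \<noteq> y @ rr)"
proof (rule ccontr)
  assume na: "\<not> ?thesis"
  have Hc: "H \<subseteq> carrier G" using subgroup.subset[OF H] .
  have Yc: "Y \<subseteq> carrier G" using Y(2) Hc by blast
  have dec: "\<exists>h'\<in>H. \<exists>q\<in>QQ Y. x = h' \<otimes> q" if xc: "x \<in> carrier G" for x
  proof (cases "x = \<one>")
    case True
    have "\<one> \<in> H" using subgroup.one_closed[OF H] .
    then show ?thesis using True one_QQ by force
  next
    case False
    then have "nf x \<noteq> []" using nf_Nil_iff xc by blast
    then obtain h rr where hr: "h \<in> H" "nf h = nf x @ rr" using na nf_props[OF xc] by blast
    then have "h \<in> generate G Y" using Y(3) by simp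
    then obtain h' q where "h' \<in> generate G Y" "q \<in> QQ Y" "eval_word G (nf x) = h' \<otimes> q"
      using prefix_lemma[OF Yc] hr(2) by blast
    then show ?thesis using nf_props(3)[OF xc] Y(3) by auto
  qed
  have "rcosets H \<subseteq> (\<lambda>q. H #> q) ` QQ Y"
  proof
    fix C assume "C \<in> rcosets H"
    then obtain x where x: "x \<in> carrier G" "C = H #> x" unfolding RCOSETS_def by blast
    obtain h' q where hq: "h' \<in> H" "q \<in> QQ Y" "x = h' \<otimes> q" using dec[OF x(1)] by blast
    have h'c: "h' \<in> carrier G" using hq(1) Hc by blast
    have qc: "q \<in> carrier G" using hq(2) QQ_carrier[OF Yc] by blast
    have "C = (H #> h') #> q" using x(2) hq(3) coset_mult_assoc[OF Hc h'c qc] by simp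
    also have "H #> h' = H" using subgroup.rcos_const[OF H is_group hq(1)] .
    finally show "C \<in> (\<lambda>q. H #> q) ` QQ Y" using hq(2) by blast
  qed
  moreover have "finite ((\<lambda>q. H #> q) ` QQ Y)" using QQ_finite[OF Y(1)] by blast
  ultimately show False using inf finite_subset by blast
qed

lemma coset_branch:
  assumes y: "red y" "wS S y" "y \<noteq> []" "\<forall>h\<in>H. \<forall>rr. nf h \<noteq> y @ rr"
    and hH: "h \<in> H" "H \<subseteq> carrier G"
    and t: "fst t \<in> S" "t \<noteq> flp (hd (winv y))"
  shows "nf (ltr G t \<otimes> inv (eval_word G y) \<otimes> h) \<noteq> [] \<and> hd (nf (ltr G t \<otimes> inv (eval_word G y) \<otimes> h)) = t"
proof -
  have ec: "eval_word G y \<in> carrier G" using y(2) by simp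
  have hc: "h \<in> carrier G" using hH by blast
  have ie: "inv (eval_word G y) \<in> carrier G" using ec by simp
  have nie: "nf (inv (eval_word G y)) = winv y" using nf_inv[OF ec] nf_eval[OF y(1,2)] by simp
  obtain \<alpha> \<gamma> \<beta> where h: "nf (inv (eval_word G y)) = \<alpha> @ \<gamma>" "nf h = winv \<gamma> @ \<beta>"
    "nf (inv (eval_word G y) \<otimes> h) = \<alpha> @ \<beta>"
    using nf_mult[OF ie hc] by blast
  have an: "\<alpha> \<noteq> []"
  proof
    assume "\<alpha> = []"
    then have "winv y = \<gamma>" using h(1) nie by simp
    then have "y = winv \<gamma>" by (metis winv_winv)
    then have "nf h = y @ \<beta>" using h(2) by simp
    then show False using y(4) hH(1) by blast
  qed
  have hd1: "hd (\<alpha> @ \<beta>) = hd (winv y)" using an h(1) nie by (metis hd_append2)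
  have cond: "nf (inv (eval_word G y) \<otimes> h) = [] \<or> hd (nf (inv (eval_word G y) \<otimes> h)) \<noteq> flp t"
  proof -
    have "hd (winv y) \<noteq> flp t" using t(2) by (metis flp_flp)
    then show ?thesis using h(3) hd1 by simp
  qed
  have "nf (ltr G t \<otimes> (inv (eval_word G y) \<otimes> h)) = t # nf (inv (eval_word G y) \<otimes> h)"
    using nf_ltr_mult[OF t(1) m_closed[OF ie hc] cond] .
  moreover have "ltr G t \<otimes> inv (eval_word G y) \<otimes> h = ltr G t \<otimes> (inv (eval_word G y) \<otimes> h)"
    using t(1) ie hc by (simp add: m_assoc)
  ultimately show ?thesis by simp
qed

end

lemma (in group) cone_tri:
  assumes P: "positive_cone G P" and z: "z \<in> carrier G" "z \<noteq> \<one>" "z \<notin> P"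
  shows "inv z \<in> P"
proof -
  have "z \<in> m_inv G ` P" using P z unfolding positive_cone_def by blast
  then obtain p where p: "p \<in> P" "z = inv p" by blast
  have "p \<in> carrier G" using P p(1) unfolding positive_cone_def by blast
  then show ?thesis using p by simp
qed

lemma (in group) cone_mult: "positive_cone G P \<Longrightarrow> x \<in> P \<Longrightarrow> y \<in> P \<Longrightarrow> x \<otimes> y \<in> P"
  unfolding positive_cone_def by blast

lemma (in group) cone_carrier: "positive_cone G P \<Longrightarrow> x \<in> P \<Longrightarrow> x \<in> carrier G"
  unfolding positive_cone_def by blast

lemma (in group) cone_one: "positive_cone G P \<Longrightarrow> \<one> \<notin> P"
  unfolding positive_cone_def by blast

lemma (in group) cone_max:
  assumes P: "positive_cone G P" and B: "finite B" "B \<noteq> {}" "B \<subseteq> carrier G"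
  shows "\<exists>M\<in>B. \<forall>b\<in>B. b = M \<or> inv b \<otimes> M \<in> P"
  using B
proof (induction B rule: finite_ne_induct)
  case (singleton x) then show ?case by simp
next
  case (insert x F)
  obtain M where M: "M \<in> F" "\<forall>b\<in>F. b = M \<or> inv b \<otimes> M \<in> P" using insert by blast
  have xc: "x \<in> carrier G" and Mc: "M \<in> carrier G" and Fc: "F \<subseteq> carrier G" using insert M by auto
  show ?case
  proof (cases "inv M \<otimes> x \<in> P")
    case True
    have "\<forall>b\<in>insert x F. b = x \<or> inv b \<otimes> x \<in> P"
    proof
      fix b assume b: "b \<in> insert x F"
      show "b = x \<or> inv b \<otimes> x \<in> P"
      proof (cases "b = x")
        case False
        then have bF: "b \<in> F" using b by simp
        then have bc: "b \<in> carrier G" using Fc by blast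
        show ?thesis
        proof (cases "b = M")
          case True then show ?thesis using \<open>inv M \<otimes> x \<in> P\<close> by simp
        next
          case False
          then have "inv b \<otimes> M \<in> P" using M bF by blast
          then have "(inv b \<otimes> M) \<otimes> (inv M \<otimes> x) \<in> P" using cone_mult[OF P] \<open>inv M \<otimes> x \<in> P\<close> by blast
          also have "(inv b \<otimes> M) \<otimes> (inv M \<otimes> x) = inv b \<otimes> x"
            using bc Mc xc by (simp add: m_assoc[symmetric]) (simp add: m_assoc)
          finally show ?thesis by simp
        qed
      qed simp
    qed
    then show ?thesis by blast
  next
    case False
    have "\<forall>b\<in>insert x F. b = M \<or> inv b \<otimes> M \<in> P"
    proof
      fix b assume b: "b \<in> insert x F"
      show "b = M \<or> inv b \<otimes> M \<in> P"
      proof (cases "b = x")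
        case True
        show ?thesis
        proof (cases "x = M")
          case False
          then have "inv M \<otimes> x \<noteq> \<one>" using xc Mc by (metis inv_closed inv_comm inv_inv m_closed r_inv inv_equality)
          then have "inv (inv M \<otimes> x) \<in> P" using cone_tri[OF P] \<open>inv M \<otimes> x \<notin> P\<close> xc Mc by simp
          then show ?thesis using True xc Mc by (simp add: inv_mult_group)
        qed (use True in simp)
      next
        case False then show ?thesis using M b by auto
      qed
    qed
    then show ?thesis using M by blast
  qed
qed

context fgrpf
begin

lemma main_swamp:
  assumes ab: "a \<in> S" "b \<in> S" "a \<noteq> b"
    and T: "finite T \<and> T \<subseteq> carrier G \<and> m_inv G ` T = T \<and> generate G T = carrier G"
    and P: "positive_cone G P" and HH: "H \<in> fg_infinite_index_subgroups G" and r: "0 < r"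
  shows "\<exists>S. negative_swamp G T P H r S"
proof -
  have ac: "a \<in> carrier G" and bc: "b \<in> carrier G" using ab S_carrier by auto
    have Tf: "finite T" and Tc: "T \<subseteq> carrier G" and Ti: "m_inv G ` T = T" and Tg: "generate G T = carrier G"
      using T by auto
    define C where "C = (\<Sum>t\<in>T. len t)"
    have Cb: "\<forall>t\<in>T. len t \<le> C" unfolding C_def using Tf by (auto intro: member_le_sum)
    define R where "R = C * r"
    have D: "len (inv x \<otimes>\<^bsub>G\<^esub> y) \<le> R" if "x \<in> carrier G" "y \<in> carrier G" "word_dist G T x y \<le> r" for x y
      unfolding R_def using dist_len[OF Tc Ti Tg Cb that] .
    define B where "B = {b \<in> carrier G. len b \<le> R}"
    have Bfin: "finite B"
    proof -
      have "B \<subseteq> eval_word G ` {w. set w \<subseteq> S \<times> (UNIV :: bool set) \<and> length w \<le> R}"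
      proof
        fix x assume "x \<in> B"
        then have xc: "x \<in> carrier G" and xl: "len x \<le> R" by (auto simp: B_def)
        have "set (nf x) \<subseteq> S \<times> (UNIV :: bool set)" using nf_props(2)[OF xc] by (auto simp: wS_def)
        moreover have "length (nf x) \<le> R" using xl by (simp add: len_def)
        moreover have "x = eval_word G (nf x)" using nf_props(3)[OF xc] by simp
        ultimately show "x \<in> eval_word G ` {w. set w \<subseteq> S \<times> (UNIV :: bool set) \<and> length w \<le> R}" by blast
      qed
      moreover have "finite {w. set w \<subseteq> S \<times> (UNIV :: bool set) \<and> length w \<le> R}"
        using finS by (intro finite_lists_length_le) simp
      ultimately show ?thesis using finite_subset by blast
    qed
    have oneB: "\<one>\<^bsub>G\<^esub> \<in> B" by (simp add: B_def len_def)
    have Bc: "B \<subseteq> carrier G" by (auto simp: B_def)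
    obtain M where M: "M \<in> B" "\<forall>b\<in>B. b = M \<or> inv b \<otimes>\<^bsub>G\<^esub> M \<in> P"
      using cone_max[OF P Bfin _ Bc] oneB by blast
    have Mc: "M \<in> carrier G" using M Bc by blast
    obtain p0 where p0: "p0 \<in> P"
    proof (cases "a \<in> P")
      case True then show ?thesis using that by blast
    next
      case False
      have "a \<noteq> \<one>\<^bsub>G\<^esub>" using ltr_ne_one[of "(a, True)"] ab by (simp add: ltr_def)
      then have "inv a \<in> P" using cone_tri[OF P ac] False by blast
      then show ?thesis using that by blast
    qed
    have p0c: "p0 \<in> carrier G" using cone_carrier[OF P p0] .
    define h where "h = M \<otimes>\<^bsub>G\<^esub> p0"
    define z1 where "z1 = h \<otimes>\<^bsub>G\<^esub> p0"
    define g where "g = inv h"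
    have hc: "h \<in> carrier G" and z1c: "z1 \<in> carrier G" and gc: "g \<in> carrier G"
      using Mc p0c by (auto simp: h_def z1_def g_def)
    define SS where "SS = (\<otimes>\<^bsub>G\<^esub>) g ` B"
    have ghinv: "inv g = h" using hc by (simp add: g_def)
    show "\<exists>S. negative_swamp G T P H r S"
    proof (intro exI[of _ SS])
      show "negative_swamp G T P H r SS" unfolding negative_swamp_def
      proof (intro conjI)
        show "SS \<subseteq> m_inv G ` P"
        proof
          fix x assume "x \<in> SS"
          then obtain c where c: "c \<in> B" "x = g \<otimes>\<^bsub>G\<^esub> c" unfolding SS_def by blast
          have cc: "c \<in> carrier G" using c Bc by blast
          have "inv c \<otimes>\<^bsub>G\<^esub> h \<in> P"
          proof (cases "c = M")
            case True
            have "inv c \<otimes>\<^bsub>G\<^esub> h = p0" using True Mc p0c by (simp add: h_def m_assoc[symmetric])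
            then show ?thesis using p0 by simp
          next
            case False
            then have "inv c \<otimes>\<^bsub>G\<^esub> M \<in> P" using M c by blast
            then have "(inv c \<otimes>\<^bsub>G\<^esub> M) \<otimes>\<^bsub>G\<^esub> p0 \<in> P" using cone_mult[OF P _ p0] by blast
            then show ?thesis using cc Mc p0c by (simp add: h_def m_assoc)
          qed
          moreover have "x = inv (inv c \<otimes>\<^bsub>G\<^esub> h)" using c cc hc by (simp add: g_def inv_mult_group)
          ultimately show "x \<in> m_inv G ` P" by blast
        qed
      next
        define s where "s = (if nf z1 \<noteq> [] \<and> fst (hd (nf z1)) = a then b else a)"
        have sS: "s \<in> S" using ab by (simp add: s_def)
        have sc: "s \<in> carrier G" using sS S_carrier by blast
        have sne: "nf z1 \<noteq> [] \<Longrightarrow> fst (hd (nf z1)) \<noteq> s" using ab by (auto simp: s_def)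
        define cj where "cj = inv z1 \<otimes>\<^bsub>G\<^esub> s \<otimes>\<^bsub>G\<^esub> z1"
        have cjc: "cj \<in> carrier G" using z1c sc by (simp add: cj_def)
        have cjne: "cj \<noteq> \<one>\<^bsub>G\<^esub>"
        proof
          assume "cj = \<one>\<^bsub>G\<^esub>"
          then have "z1 \<otimes>\<^bsub>G\<^esub> cj \<otimes>\<^bsub>G\<^esub> inv z1 = \<one>\<^bsub>G\<^esub>" using z1c by simp
          moreover have "z1 \<otimes>\<^bsub>G\<^esub> cj \<otimes>\<^bsub>G\<^esub> inv z1 = s" using z1c sc
            by (simp add: cj_def m_assoc[symmetric]) (simp add: m_assoc)
          ultimately show False using ltr_ne_one[of "(s, True)"] sS by (simp add: ltr_def)
        qed
        obtain e where e: "inv z1 \<otimes>\<^bsub>G\<^esub> ltr G (s, e) \<otimes>\<^bsub>G\<^esub> z1 \<in> P"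
        proof (cases "cj \<in> P")
          case True then show ?thesis using that[of True] by (simp add: ltr_def cj_def)
        next
          case False
          then have "inv cj \<in> P" using cone_tri[OF P cjc cjne] by blast
          moreover have "inv cj = inv z1 \<otimes>\<^bsub>G\<^esub> inv s \<otimes>\<^bsub>G\<^esub> z1" using z1c sc
            by (simp add: cj_def inv_mult_group m_assoc)
          ultimately show ?thesis using that[of False] by (simp add: ltr_def)
        qed
        define w where "w = ltr G (s, e)"
        have wc: "w \<in> carrier G" using sS by (simp add: w_def)
        define v where "v = p0 \<otimes>\<^bsub>G\<^esub> (inv z1 \<otimes>\<^bsub>G\<^esub> w \<otimes>\<^bsub>G\<^esub> z1)"
        have vP: "v \<in> P" using cone_mult[OF P p0 e] by (simp add: v_def w_def)
        have vc: "v \<in> carrier G" using cone_carrier[OF P vP] .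
        have ivu: "inv g \<otimes>\<^bsub>G\<^esub> p0 = z1" using ghinv by (simp add: z1_def)
        have ivv: "inv g \<otimes>\<^bsub>G\<^esub> v = w \<otimes>\<^bsub>G\<^esub> z1"
        proof -
          have "inv g \<otimes>\<^bsub>G\<^esub> v = (h \<otimes>\<^bsub>G\<^esub> p0) \<otimes>\<^bsub>G\<^esub> (inv z1 \<otimes>\<^bsub>G\<^esub> w \<otimes>\<^bsub>G\<^esub> z1)"
            using ghinv hc p0c z1c wc by (simp add: v_def m_assoc)
          also have "\<dots> = z1 \<otimes>\<^bsub>G\<^esub> ((inv z1 \<otimes>\<^bsub>G\<^esub> w) \<otimes>\<^bsub>G\<^esub> z1)"
            by (simp add: z1_def)
          also have "\<dots> = ((z1 \<otimes>\<^bsub>G\<^esub> inv z1) \<otimes>\<^bsub>G\<^esub> w) \<otimes>\<^bsub>G\<^esub> z1"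
            using z1c wc by (simp only: m_assoc inv_closed m_closed)
          also have "\<dots> = w \<otimes>\<^bsub>G\<^esub> z1" using z1c wc by simp
          finally show ?thesis .
        qed
        have rd: "r_disconnects G T r SS {p0} {v}" unfolding r_disconnects_def
          proof (intro allI impI)
            fix p assume pp: "r_path G T r p \<and> hd p \<in> {p0} \<and> last p \<in> {v}"
            show "set p \<inter> SS \<noteq> {}"
            proof
              assume av: "set p \<inter> SS = {}"
              have pb: "R < len (inv g \<otimes>\<^bsub>G\<^esub> hd p) \<and> hd (nf (inv g \<otimes>\<^bsub>G\<^esub> hd p)) = hd (nf (inv g \<otimes>\<^bsub>G\<^esub> last p))"
                using path_branch[OF gc D, where p=p] pp av unfolding SS_def B_def by blast
              have hp: "hd p = p0" "last p = v" using pp by auto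
              have ne: "nf z1 \<noteq> []" using pb hp ivu by (auto simp: len_def)
              have cond: "nf z1 = [] \<or> hd (nf z1) \<noteq> flp (s, e)"
                using sne[OF ne] by (auto simp: flp_def)
              have "nf (w \<otimes>\<^bsub>G\<^esub> z1) = (s, e) # nf z1"
                unfolding w_def using nf_ltr_mult[of "(s, e)" z1] sS z1c cond by simp
              then have "hd (nf z1) = (s, e)" using pb hp ivu ivv by simp
              then show False using sne[OF ne] by simp
            qed
          qed
        show "r_disconnects_cone G T r SS P" unfolding r_disconnects_cone_def using rd vP p0 by blast
      next
        have Hs: "subgroup H G" and Yex: "\<exists>Y. finite Y \<and> Y \<subseteq> H \<and> generate G Y = H"
          and Hinf: "infinite (rcosets\<^bsub>G\<^esub> H)"
          using HH unfolding fg_infinite_index_subgroups_def by auto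
        obtain Y where Y: "finite Y" "Y \<subseteq> H" "generate G Y = H" using Yex by blast
        have Hc: "H \<subseteq> carrier G" using subgroup.subset[OF Hs] .
        obtain y where y: "red y" "wS S y" "y \<noteq> []" "\<forall>h\<in>H. \<forall>rr. nf h \<noteq> y @ rr"
          using exists_nonprefix[OF Hs Y Hinf] by blast
        define l where "l = flp (hd (winv y))"
        define t1 where "t1 = (if (a, True) = l then (a, False) else (a, True))"
        define t2 where "t2 = (if (b, True) = l then (b, False) else (b, True))"
        have t1: "fst t1 \<in> S" "t1 \<noteq> l" using ab by (auto simp: t1_def)
        have t2: "fst t2 \<in> S" "t2 \<noteq> l" using ab by (auto simp: t2_def)
        have t12: "t1 \<noteq> t2" using ab by (auto simp: t1_def t2_def)
        define x1 where "x1 = ltr G t1 \<otimes>\<^bsub>G\<^esub> inv (eval_word G y)"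
        define x2 where "x2 = ltr G t2 \<otimes>\<^bsub>G\<^esub> inv (eval_word G y)"
        have x1c: "x1 \<in> carrier G" and x2c: "x2 \<in> carrier G" using t1 t2 y(2) by (auto simp: x1_def x2_def)
        have key: "nf (inv g \<otimes>\<^bsub>G\<^esub> z) \<noteq> [] \<and> hd (nf (inv g \<otimes>\<^bsub>G\<^esub> z)) = t"
          if zin: "z \<in> (g \<otimes>\<^bsub>G\<^esub> (ltr G t \<otimes>\<^bsub>G\<^esub> inv (eval_word G y))) <#\<^bsub>G\<^esub> H" and tS: "fst t \<in> S" and tl: "t \<noteq> l" for z t
        proof -
          obtain hh where hh: "hh \<in> H" "z = g \<otimes>\<^bsub>G\<^esub> (ltr G t \<otimes>\<^bsub>G\<^esub> inv (eval_word G y)) \<otimes>\<^bsub>G\<^esub> hh"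
            using zin unfolding l_coset_def by blast
          have hhc: "hh \<in> carrier G" using hh Hc by blast
          have ec: "eval_word G y \<in> carrier G" using y(2) by simp
          have "inv g \<otimes>\<^bsub>G\<^esub> z = ltr G t \<otimes>\<^bsub>G\<^esub> inv (eval_word G y) \<otimes>\<^bsub>G\<^esub> hh"
            using hh(2) gc tS ec hhc by (simp add: m_assoc[symmetric])
          moreover have "t \<noteq> flp (hd (winv y))" using tl by (simp add: l_def)
          ultimately show ?thesis using coset_branch[OF y hh(1) Hc tS] by simp
        qed
        have g12: "g \<otimes>\<^bsub>G\<^esub> x1 \<in> carrier G" "g \<otimes>\<^bsub>G\<^esub> x2 \<in> carrier G" using gc x1c x2c by auto
          have rd2: "r_disconnects G T r SS ((g \<otimes>\<^bsub>G\<^esub> x1) <#\<^bsub>G\<^esub> H) ((g \<otimes>\<^bsub>G\<^esub> x2) <#\<^bsub>G\<^esub> H)"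
            unfolding r_disconnects_def
          proof (intro allI impI)
            fix p assume pp: "r_path G T r p \<and> hd p \<in> (g \<otimes>\<^bsub>G\<^esub> x1) <#\<^bsub>G\<^esub> H \<and> last p \<in> (g \<otimes>\<^bsub>G\<^esub> x2) <#\<^bsub>G\<^esub> H"
            show "set p \<inter> SS \<noteq> {}"
            proof
              assume av: "set p \<inter> SS = {}"
              have pb: "hd (nf (inv g \<otimes>\<^bsub>G\<^esub> hd p)) = hd (nf (inv g \<otimes>\<^bsub>G\<^esub> last p))"
                using path_branch[OF gc D, where p=p] pp av unfolding SS_def B_def by blast
              have "hd (nf (inv g \<otimes>\<^bsub>G\<^esub> hd p)) = t1" using key[of "hd p" t1] pp t1 by (simp add: x1_def)
              moreover have "hd (nf (inv g \<otimes>\<^bsub>G\<^esub> last p)) = t2" using key[of "last p" t2] pp t2 by (simp add: x2_def)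
              ultimately show False using pb t12 by simp
            qed
          qed
        show "\<exists>g1\<in>carrier G. \<exists>g2\<in>carrier G. r_disconnects G T r SS (g1 <#\<^bsub>G\<^esub> H) (g2 <#\<^bsub>G\<^esub> H)"
          using g12 rd2 by blast
      qed
    qed
qed

end

theorem proposition5p4:
  fixes G :: "('a, 'b) monoid_scheme"
  assumes "free_group G"
    and "finitely_generated G"
    and "\<not> comm_group G"
  shows "hucha G (fg_infinite_index_subgroups G)"
proof -
  obtain S where grp: "group G" and fbS: "free_basis G S"
    using assms(1) unfolding free_group_def by blast
  have fg: "fgrp G S" using grp fbS by (simp add: fgrp_def fgrp_axioms_def)
  have finS: "finite S" using fgrp.finite_S[OF fg assms(2)] .
  have F: "fgrpf G S" using grp fbS finS by (simp add: fgrpf_def fgrpf_axioms_def fgrp_def fgrp_axioms_def)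
  obtain a b where ab: "a \<in> S" "b \<in> S" "a \<noteq> b" using fgrp.two_gens[OF fg assms(3)] by blast
  show ?thesis unfolding hucha_def
  proof (intro conjI allI impI ballI)
    show "group G" by (rule grp)
    show "finitely_generated G" by (rule assms(2))
    show "left_orderable G" by (rule fgrpf.left_orderable[OF F])
    fix T P H and r :: nat
    assume "finite T \<and> T \<subseteq> carrier G \<and> m_inv G ` T = T \<and> generate G T = carrier G"
      and "positive_cone G P" and "H \<in> fg_infinite_index_subgroups G" and "0 < r"
    then show "\<exists>S. negative_swamp G T P H r S" using fgrpf.main_swamp[OF F ab] by blast
  qed
qed

end
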